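(* Let $\lambda$ be a positive integer, $n\ge0$ an integer, and for integers $m\ge0$ let \[ I_{m,n}^{(\lambda)}=\int_0^\pi \cos(2m\theta)\,\log\big(C_n^{(\lambda)}(\cos\theta)\big)^2\,\mathrm{d}\theta . \] Then \[ I_{0,n}^{(\lambda)}=2\pi\log\left(\frac{(\lambda)_n}{n!}\right), \] and for $m\ge1$, \[ I_{m,n}^{(\lambda)}=\frac{(2\lambda-1)\pi}{m}+\frac{\pi}{(2m)!}\,\frac{d^{2m}}{dz^{2m}}\left.\left(\log\sum_{\nu=0}^{\lambda-1}\alpha_{\nu,n}^{(\lambda)}\big(z^{2n+2\lambda+2\nu}-z^{2\lambda-2\nu-2}\big)\right)\right|_{z=0}. \]
   Context: $C_n^{(\lambda)}(x)$ denotes the Gegenbauer polynomial of degree $n$ and parameter $\lambda$, defined by $(1-2xt+t^2)^{-\lambda}=\sum_{n\ge0}C_n^{(\lambda)}(x)t^n$. $(a)_k=\Gamma(a+k)/\Gamma(a)$ is the Pochhammer symbol, and $\alpha_{\nu,n}^{(\lambda)}=\dfrac{(1-\lambda)_\nu (n+1)_\nu}{\nu!\,(n+\lambda+1)_\nu}$. The polynomial $p(z)=\sum_{\nu=0}^{\lambda-1}\alpha_{\nu,n}^{(\lambda)}(z^{2n+2\lambda+2\nu}-z^{2\lambda-2\nu-2})$ satisfies $p(0)=-\alpha_{\lambda-1,n}^{(\lambda)}\neq0$, so $\log p(z)$ is holomorphic near $z=0$ for any choice of branch and its derivatives of order $\ge1$ at $0$ do not depend on the branch. *)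

theory Defs
  imports "HOL-Analysis.Analysis" "HOL-Computational_Algebra.Formal_Power_Series"
begin

definition gegenbauer :: "nat \<Rightarrow> nat \<Rightarrow> real \<Rightarrow> real" where
  "gegenbauer lam n x =
     fps_nth (inverse ((1 - fps_const (2 * x) * fps_X + fps_X ^ 2) ^ lam)) n"

definition alpha_coef :: "nat \<Rightarrow> nat \<Rightarrow> nat \<Rightarrow> real" where
  "alpha_coef lam \<nu> n =
     pochhammer (1 - real lam) \<nu> * pochhammer (real n + 1) \<nu>
       / (fact \<nu> * pochhammer (real n + real lam + 1) \<nu>)"

definition gpoly :: "nat \<Rightarrow> nat \<Rightarrow> complex \<Rightarrow> complex" where
  "gpoly lam n z = (\<Sum>\<nu>=0..lam-1. complex_of_real (alpha_coef lam \<nu> n) *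
      (z ^ (2*n + 2*lam + 2*\<nu>) - z ^ (2*lam - 2*\<nu> - 2)))"

end

theory Submission
  imports Defs "HOL-Real_Asymp.Real_Asymp"
begin

definition PC :: "nat \<Rightarrow> nat \<Rightarrow> real" where
  "PC lam k = pochhammer (real lam) k / fact k"

definition ac :: "nat \<Rightarrow> nat \<Rightarrow> nat \<Rightarrow> real" where
  "ac lam n k = PC lam k * PC lam (n - k)"

lemma PC_choose: "lam > 0 \<Longrightarrow> real ((lam + k - 1) choose k) = PC lam k"
proof -
  assume "lam > 0"
  have "real ((lam + k - 1) choose k) = real (lam + k - 1) gchoose k"
    by (simp add: binomial_gbinomial)
  also have "\<dots> = pochhammer (real (lam + k - 1) - real k + 1) k / fact k"
    by (rule gbinomial_pochhammer')
  also have "real (lam + k - 1) - real k + 1 = real lam" using \<open>lam > 0\<close> by (simp add: of_nat_diff)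
  finally show ?thesis by (simp add: PC_def)
qed

definition cm :: "real fps \<Rightarrow> complex fps" where
  "cm F = Abs_fps (\<lambda>k. complex_of_real (fps_nth F k))"

lemma cm_nth [simp]: "fps_nth (cm F) k = complex_of_real (fps_nth F k)"
  by (simp add: cm_def)

lemma cm_mult: "cm (F * G) = cm F * cm G"
  by (rule fps_ext) (simp add: fps_mult_nth)

lemma cm_one: "cm 1 = 1"
  by (rule fps_ext) simp

lemma cm_add: "cm (F + G) = cm F + cm G"
  by (rule fps_ext) simp

lemma cm_diff: "cm (F - G) = cm F - cm G"
  by (rule fps_ext) simp

lemma cm_const: "cm (fps_const c) = fps_const (complex_of_real c)"
  by (rule fps_ext) simp

lemma cm_X: "cm fps_X = fps_X"
  by (rule fps_ext) (simp add: fps_X_def)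

lemma cm_power: "cm (F ^ k) = cm F ^ k"
  by (induction k) (simp_all add: cm_one cm_mult)

lemma cm_inverse: assumes "fps_nth F 0 \<noteq> 0" shows "cm (inverse F) = inverse (cm F)"
proof -
  have "F * inverse F = 1" using assms by (simp add: inverse_mult_eq_1')
  hence "cm F * cm (inverse F) = 1" by (metis cm_mult cm_one)
  thus ?thesis by (metis fps_inverse_unique)
qed

lemma gegenbauer_cis:
  assumes "lam > 0"
  shows "complex_of_real (gegenbauer lam n (cos t)) =
         (\<Sum>k\<le>n. complex_of_real (ac lam n k) * cis (t * (2 * real k - real n)))"
proof -
  define z where "z = cis t"
  define A where "A = (1 - fps_const (2 * cos t) * fps_X + fps_X ^ 2 :: real fps)"
  have A0: "fps_nth (A ^ lam) 0 \<noteq> 0" by (simp add: A_def fps_nth_power_0)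
  have cmA: "cm A = (1 - fps_const z * fps_X) * (1 - fps_const (cnj z) * fps_X)"
  proof -
    have "cm A = 1 - fps_const (complex_of_real (2 * cos t)) * fps_X + fps_X ^ 2"
      by (simp add: A_def cm_add cm_diff cm_mult cm_const cm_X cm_power cm_one)
    also have "complex_of_real (2 * cos t) = z + cnj z"
      by (simp add: z_def cis.ctr complex_eq_iff)
    also have "fps_X ^ 2 = fps_const (z * cnj z) * (fps_X ^ 2 :: complex fps)"
      by (simp add: z_def cis_cnj cis_mult)
    finally have "cm A = 1 - fps_const (z + cnj z) * fps_X + fps_const (z * cnj z) * fps_X ^ 2" .
    moreover have "(1 - fps_const z * fps_X) * (1 - fps_const (cnj z) * fps_X) = 1 - (fps_const z + fps_const (cnj z)) * fps_X + (fps_const z * fps_const (cnj z)) * (fps_X ^ 2 :: complex fps)"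
      by (simp add: algebra_simps power2_eq_square)
    ultimately show ?thesis by simp
  qed
  have "complex_of_real (gegenbauer lam n (cos t)) = fps_nth (cm (inverse (A ^ lam))) n"
    by (simp add: gegenbauer_def A_def)
  also have "cm (inverse (A ^ lam)) = inverse ((1 - fps_const z * fps_X) ^ lam) * inverse ((1 - fps_const (cnj z) * fps_X) ^ lam)"
    using A0 by (simp add: cm_inverse cm_power cmA power_mult_distrib fps_inverse_mult)
  also have "\<dots> = Abs_fps (\<lambda>k. of_nat (lam + k - 1 choose k) * z ^ k) * Abs_fps (\<lambda>k. of_nat (lam + k - 1 choose k) * cnj z ^ k)"
    using assms by (simp add: one_minus_const_fps_X_neg_power')
  also have "fps_nth \<dots> n = (\<Sum>k\<le>n. complex_of_real (ac lam n k) * cis (t * (2 * real k - real n)))"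
  proof -
    have "fps_nth (Abs_fps (\<lambda>k. of_nat (lam + k - 1 choose k) * z ^ k) * Abs_fps (\<lambda>k. of_nat (lam + k - 1 choose k) * cnj z ^ k)) n
       = (\<Sum>k=0..n. (of_nat (lam + k - 1 choose k) * z ^ k) * (of_nat (lam + (n - k) - 1 choose (n - k)) * cnj z ^ (n - k)))"
      by (simp add: fps_mult_nth)
    also have "\<dots> = (\<Sum>k\<le>n. complex_of_real (ac lam n k) * cis (t * (2 * real k - real n)))"
    proof (rule sum.cong)
      show "{0..n} = {..n}" by auto
    next
      fix k assume "k \<in> {..n}"
      hence kn: "k \<le> n" by simp
      have e1: "complex_of_nat (lam + k - 1 choose k) = complex_of_real (PC lam k)"
        using PC_choose[OF assms, of k] by (metis of_real_of_nat_eq)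
      have e2: "complex_of_nat (lam + (n - k) - 1 choose (n - k)) = complex_of_real (PC lam (n - k))"
        using PC_choose[OF assms, of "n - k"] by (metis of_real_of_nat_eq)
      have e3: "z ^ k * cnj z ^ (n - k) = cis (t * (2 * real k - real n))"
        using kn by (simp add: z_def cis_cnj Complex.DeMoivre cis_mult of_nat_diff algebra_simps)
      show "(of_nat (lam + k - 1 choose k) * z ^ k) * (of_nat (lam + (n - k) - 1 choose (n - k)) * cnj z ^ (n - k))
            = complex_of_real (ac lam n k) * cis (t * (2 * real k - real n))"
        unfolding e1 e2 e3[symmetric] ac_def by (simp add: algebra_simps)
    qed
    finally show ?thesis .
  qed
  finally show ?thesis .
qed

definition hh :: "nat \<Rightarrow> nat \<Rightarrow> real \<Rightarrow> real" where
  "hh lam n t = (\<Sum>k\<le>n. ac lam n k * cos (t * (2 * real k - real n)))"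

lemma gegenbauer_hh: assumes "lam > 0" shows "gegenbauer lam n (cos t) = hh lam n t"
proof -
  have "gegenbauer lam n (cos t) = Re (complex_of_real (gegenbauer lam n (cos t)))" by simp
  also have "\<dots> = hh lam n t" unfolding gegenbauer_cis[OF assms] hh_def
    by (simp add: Re_sum cis.sel)
  finally show ?thesis .
qed

lemma gegenbauer_Q: assumes "lam > 0"
  shows "complex_of_real (gegenbauer lam n (cos t)) =
     cis (- (real n * t)) * (\<Sum>k\<le>n. complex_of_real (ac lam n k) * cis (2 * t) ^ k)"
  unfolding gegenbauer_cis[OF assms] sum_distrib_left
  by (rule sum.cong) (auto simp: Complex.DeMoivre cis_mult algebra_simps)

lemma PC_pos: "lam > 0 \<Longrightarrow> PC lam k > 0"
  by (simp add: PC_def pochhammer_pos)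

lemma PC_0 [simp]: "PC lam 0 = 1" by (simp add: PC_def)

lemma PC_up: "real lam * PC (Suc lam) j = PC lam j * (real lam + real j)"
proof -
  have "real lam * pochhammer (real lam + 1) j = pochhammer (real lam) j * (real lam + real j)"
    by (metis pochhammer_Suc pochhammer_rec)
  thus ?thesis by (simp add: PC_def field_simps)
qed

lemma PC_shift: "real lam * PC (Suc lam) j = real (Suc j) * PC lam (Suc j)"
proof -
  have "real lam * pochhammer (real lam + 1) j = pochhammer (real lam) (Suc j)"
    by (simp add: pochhammer_rec)
  moreover have "real (Suc j) * PC lam (Suc j) = pochhammer (real lam) (Suc j) / fact j"
    by (simp add: PC_def fact_Suc del: of_nat_Suc)
  ultimately show ?thesis by (simp add: PC_def add.commute)
qed

lemma key_coef:
  assumes "k \<le> Suc n"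
  shows "(real (Suc n) - 2 * real k) * ac lam (Suc n) k =
         real lam * ((if k \<le> n then ac (Suc lam) n k else 0) - (if k \<ge> 1 then ac (Suc lam) n (k - 1) else 0))"
proof (cases "k = 0")
  case True
  thus ?thesis using PC_shift[of lam n] by (simp add: ac_def)
next
  case False
  then obtain k' where k': "k = Suc k'" by (cases k) auto
  show ?thesis
  proof (cases "k = Suc n")
    case True
    thus ?thesis using PC_shift[of lam n] k' by (simp add: ac_def algebra_simps)
  next
    case False
    with assms k' have kn: "k' < n" by simp
    then obtain r where r: "n = k' + Suc r" by (metis add_Suc_right less_imp_Suc_add add.commute)
    have e1: "real lam * PC (Suc lam) r = real (Suc r) * PC lam (Suc r)" by (rule PC_shift)
    have e2: "real lam * PC (Suc lam) k' = real (Suc k') * PC lam (Suc k')" by (rule PC_shift)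
    have e3: "real lam * PC (Suc lam) (Suc k') = PC lam (Suc k') * (real lam + real (Suc k'))" by (rule PC_up)
    have e4: "real lam * PC (Suc lam) (Suc r) = PC lam (Suc r) * (real lam + real (Suc r))" by (rule PC_up)
    have "real lam * (real lam * (PC (Suc lam) (Suc k') * PC (Suc lam) r - PC (Suc lam) k' * PC (Suc lam) (Suc r)))
        = (real lam * PC (Suc lam) (Suc k')) * (real lam * PC (Suc lam) r) - (real lam * PC (Suc lam) k') * (real lam * PC (Suc lam) (Suc r))"
      by (simp add: algebra_simps)
    also have "\<dots> = real lam * ((real (Suc r) - real (Suc k')) * (PC lam (Suc k') * PC lam (Suc r)))"
      unfolding e1 e2 e3 e4 by (simp add: algebra_simps)
    finally have *: "real lam * (real lam * (PC (Suc lam) (Suc k') * PC (Suc lam) r - PC (Suc lam) k' * PC (Suc lam) (Suc r)))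
       = real lam * ((real (Suc r) - real (Suc k')) * (PC lam (Suc k') * PC lam (Suc r)))" .
    show ?thesis
    proof (cases "lam = 0")
      case True
      thus ?thesis by (simp add: ac_def PC_def r k' pochhammer_0_left)
    next
      case False
      hence "real lam * (PC (Suc lam) (Suc k') * PC (Suc lam) r - PC (Suc lam) k' * PC (Suc lam) (Suc r))
          = (real (Suc r) - real (Suc k')) * (PC lam (Suc k') * PC lam (Suc r))" using * by simp
      moreover have "Suc n - Suc k' = Suc r" "n - Suc k' = r" "n - k' = Suc r" using r by auto
      ultimately show ?thesis using kn r k' by (simp add: ac_def algebra_simps)
    qed
  qed
qed

lemma hh_deriv:
  "(hh lam (Suc n) has_real_derivative (- 2 * real lam * sin t * hh (Suc lam) n t)) (at t)"
proof -
  define c where "c k = 2 * real k - real (Suc n)" for k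
  define s where "s k = sin (t * c k)" for k
  define b where "b k = ac (Suc lam) n k" for k
  define B0 where "B0 k = (if k \<le> n then b k else 0)" for k
  define B1 where "B1 k = (if k \<ge> 1 then b (k - 1) else 0)" for k
  have D: "(hh lam (Suc n) has_real_derivative (\<Sum>k\<le>Suc n. ac lam (Suc n) k * (- sin (t * c k) * c k))) (at t)"
    unfolding hh_def c_def
    by (auto intro!: derivative_eq_intros sum.cong simp: algebra_simps)
  have "- 2 * real lam * sin t * hh (Suc lam) n t = - real lam * (\<Sum>k\<le>n. b k * (2 * sin t * cos (t * (2 * real k - real n))))"
    by (simp add: hh_def b_def sum_distrib_left algebra_simps)
  also have "\<dots> = - real lam * (\<Sum>k\<le>n. b k * (s (Suc k) - s k))"
  proof -
    have "2 * sin t * cos (t * (2 * real k - real n)) = s (Suc k) - s k" for k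
    proof -
      have "s (Suc k) = sin (t * (2 * real k - real n) + t)" by (simp add: s_def c_def algebra_simps)
      moreover have "s k = sin (t * (2 * real k - real n) - t)" by (simp add: s_def c_def algebra_simps)
      ultimately show ?thesis by (simp add: sin_add sin_diff)
    qed
    thus ?thesis by simp
  qed
  also have "\<dots> = - real lam * ((\<Sum>k\<le>Suc n. B1 k * s k) - (\<Sum>k\<le>Suc n. B0 k * s k))"
  proof -
    have "(\<Sum>k\<le>Suc n. B1 k * s k) = (\<Sum>k\<le>n. b k * s (Suc k))"
      by (subst sum.atMost_Suc_shift) (simp add: B1_def)
    moreover have "(\<Sum>k\<le>Suc n. B0 k * s k) = (\<Sum>k\<le>n. b k * s k)"
      by (simp add: B0_def)
    ultimately show ?thesis by (simp add: sum_subtractf algebra_simps)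
  qed
  also have "\<dots> = (\<Sum>k\<le>Suc n. real lam * (B0 k - B1 k) * s k)"
    unfolding sum_subtractf[symmetric] sum_distrib_left by (rule sum.cong) (simp_all add: algebra_simps)
  also have "\<dots> = (\<Sum>k\<le>Suc n. (real (Suc n) - 2 * real k) * ac lam (Suc n) k * s k)"
  proof (rule sum.cong)
    fix k assume "k \<in> {..Suc n}"
    hence "(real (Suc n) - 2 * real k) * ac lam (Suc n) k = real lam * (B0 k - B1 k)"
      using key_coef[of k n lam] by (simp add: B0_def B1_def b_def)
    thus "real lam * (B0 k - B1 k) * s k = (real (Suc n) - 2 * real k) * ac lam (Suc n) k * s k" by simp
  qed simp
  also have "\<dots> = (\<Sum>k\<le>Suc n. ac lam (Suc n) k * (- sin (t * c k) * c k))"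
    by (rule sum.cong) (auto simp: s_def c_def algebra_simps)
  finally show ?thesis using D by simp
qed

lemma PC_1 [simp]: "PC 1 k = 1"
  by (simp add: PC_def pochhammer_fact[symmetric])

lemma PC_Suc0 [simp]: "PC (Suc 0) k = 1"
  using PC_1 by simp

lemma hh_1: "sin t * hh 1 n t = sin ((real n + 1) * t)"
proof -
  define g where "g k = sin (t * (2 * real k - real n - 1))" for k
  have "2 * (sin t * hh 1 n t) = (\<Sum>k<Suc n. g (Suc k) - g k)"
    unfolding hh_def ac_def lessThan_Suc_atMost sum_distrib_left
  proof (rule sum.cong)
    fix k assume "k \<in> {..n}"
    have "g (Suc k) = sin (t * (2 * real k - real n) + t)" by (simp add: g_def algebra_simps)
    moreover have "g k = sin (t * (2 * real k - real n) - t)" by (simp add: g_def algebra_simps)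
    ultimately show "2 * (sin t * (PC 1 k * PC 1 (n - k) * cos (t * (2 * real k - real n)))) = g (Suc k) - g k"
      by (simp add: sin_add sin_diff)
  qed simp
  also have "\<dots> = g (Suc n) - g 0" by (rule sum_lessThan_telescope)
  also have "\<dots> = 2 * sin ((real n + 1) * t)"
  proof -
    have "g (Suc n) = sin ((real n + 1) * t)" by (simp add: g_def algebra_simps)
    moreover have "g 0 = sin (- ((real n + 1) * t))"
    proof -
      have "t * (2 * real 0 - real n - 1) = - ((real n + 1) * t)" by (simp add: algebra_simps)
      thus ?thesis unfolding g_def by (simp only:)
    qed
    ultimately show ?thesis by (simp only: sin_minus)
  qed
  finally show ?thesis by simp
qed

lemma hh_zeros_1: "\<exists>t. (\<forall>i<n. 0 < t i \<and> t i < pi \<and> hh 1 n (t i) = 0) \<and> (\<forall>i j. i < j \<longrightarrow> j < n \<longrightarrow> t i < t j)"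
proof (intro exI conjI allI impI)
  define t where "t i = (real i + 1) * pi / (real n + 1)" for i
  fix i assume i: "i < n"
  show t0: "0 < t i" unfolding t_def by (intro divide_pos_pos mult_pos_pos) auto
  show t1: "t i < pi" using i by (simp add: t_def field_simps)
  have "sin (t i) > 0" using t0 t1 by (intro sin_gt_zero)
  moreover have "sin ((real n + 1) * t i) = 0"
  proof -
    have "(real n + 1) * t i = real (Suc i) * pi" by (simp add: t_def field_simps)
    thus ?thesis by (simp only: sin_npi)
  qed
  ultimately show "hh 1 n (t i) = 0" using hh_1[of "t i" n] by simp
next
  fix i j :: nat assume "i < j" "j < n"
  thus "(real i + 1) * pi / (real n + 1) < (real j + 1) * pi / (real n + 1)"
    by (intro divide_strict_right_mono) auto
qed

lemma hh_zeros:
  assumes "lam \<ge> 1"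
  shows "\<exists>t. (\<forall>i<n. 0 < t i \<and> t i < pi \<and> hh lam n (t i) = 0) \<and> (\<forall>i j. i < j \<longrightarrow> j < n \<longrightarrow> t i < t j)"
proof -
  obtain d where d: "lam = Suc d" using assms by (cases lam) auto
  have "\<forall>n. \<exists>t. (\<forall>i<n. 0 < t i \<and> t i < pi \<and> hh (Suc d) n (t i) = 0) \<and> (\<forall>i j. i < j \<longrightarrow> j < n \<longrightarrow> t i < t j)"
  proof (induction d)
    case 0
    show ?case using hh_zeros_1 by (simp only: One_nat_def[symmetric]) blast
  next
    case (Suc d)
    show ?case
    proof
      fix n
      obtain t where t: "\<forall>i<Suc n. 0 < t i \<and> t i < pi \<and> hh (Suc d) (Suc n) (t i) = 0"
          and mono: "\<forall>i j. i < j \<longrightarrow> j < Suc n \<longrightarrow> t i < t j"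
        using Suc.IH[rule_format, of "Suc n"] by (elim exE conjE)
      have ex0: "\<forall>i. i < n \<longrightarrow> (\<exists>s. t i < s \<and> s < t (Suc i) \<and> hh (Suc (Suc d)) n s = 0)"
      proof (intro allI impI)
        fix i assume i: "i < n"
        have lt: "t i < t (Suc i)" using mono i by auto
        have dv: "\<And>x. (hh (Suc d) (Suc n) has_real_derivative (- 2 * real (Suc d) * sin x * hh (Suc (Suc d)) n x)) (at x)"
          by (rule hh_deriv)
        have cont: "continuous_on {t i..t (Suc i)} (hh (Suc d) (Suc n))"
          by (intro continuous_at_imp_continuous_on ballI DERIV_isCont[OF dv])
        have diff: "\<And>x. hh (Suc d) (Suc n) differentiable at x"
          using dv unfolding real_differentiable_def by blast
        obtain z where z: "t i < z" "z < t (Suc i)" "(hh (Suc d) (Suc n) has_real_derivative 0) (at z)"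
          using Rolle[OF lt _ cont diff] t i by auto
        have b1: "0 < t i" using t i by simp
        have b2: "t (Suc i) < pi" using t i by simp
        have e: "- 2 * real (Suc d) * sin z * hh (Suc (Suc d)) n z = 0"
          by (rule DERIV_unique[OF dv[of z] z(3)])
        have "sin z > 0" using z(1,2) b1 b2 by (intro sin_gt_zero) linarith+
        with e have "hh (Suc (Suc d)) n z = 0" by simp
        thus "\<exists>s. t i < s \<and> s < t (Suc i) \<and> hh (Suc (Suc d)) n s = 0" using z by blast
      qed
      hence ex1: "\<forall>i. \<exists>s. i < n \<longrightarrow> (t i < s \<and> s < t (Suc i) \<and> hh (Suc (Suc d)) n s = 0)" by blast
      obtain s where s0: "\<forall>i. i < n \<longrightarrow> (t i < s i \<and> s i < t (Suc i) \<and> hh (Suc (Suc d)) n (s i) = 0)"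
        using choice[OF ex1] by blast
      hence s: "\<And>i. i < n \<Longrightarrow> t i < s i \<and> s i < t (Suc i) \<and> hh (Suc (Suc d)) n (s i) = 0" by blast
      show "\<exists>t. (\<forall>i<n. 0 < t i \<and> t i < pi \<and> hh (Suc (Suc d)) n (t i) = 0) \<and> (\<forall>i j. i < j \<longrightarrow> j < n \<longrightarrow> t i < t j)"
      proof (intro exI[of _ s] conjI allI impI)
        fix i assume i: "i < n"
        have a: "t i < s i" "s i < t (Suc i)" using s[OF i] by auto
        have b: "0 < t i" "t (Suc i) < pi" using t i by simp_all
        show "0 < s i" using a b by linarith
        show "s i < pi" using a b by linarith
        show "hh (Suc (Suc d)) n (s i) = 0" using s[OF i] by simp
      next
        fix i j assume ij: "i < j" "j < n"
        have "s i < t (Suc i)" using s[of i] ij by simp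
        also have "t (Suc i) \<le> t j"
        proof (cases "Suc i = j")
          case False
          hence "Suc i < j" using ij by simp
          moreover have "j < Suc n" using ij by simp
          ultimately have "t (Suc i) < t j" using mono by blast
          thus ?thesis by simp
        qed simp
        also have "t j < s j" using s[of j] ij by simp
        finally show "s i < s j" .
      qed
    qed
  qed
  thus ?thesis unfolding d by (rule spec)
qed

definition Gr :: "nat \<Rightarrow> nat \<Rightarrow> real poly" where
  "Gr lam n = (\<Sum>v<lam. smult (alpha_coef lam v n) (monom 1 (n + lam + v) - monom 1 (lam - 1 - v)))"

definition gc :: "nat \<Rightarrow> nat \<Rightarrow> nat \<Rightarrow> real" where
  "gc lam n j = (if n + lam \<le> j \<and> j < n + 2 * lam then alpha_coef lam (j - (n + lam)) n
      else if j < lam then - alpha_coef lam (lam - 1 - j) n else 0)"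

lemma coeff_Gr: "coeff (Gr lam n) j = gc lam n j"
proof -
  have "coeff (Gr lam n) j = (\<Sum>v<lam. (if v = j - (n + lam) \<and> n + lam \<le> j then alpha_coef lam v n else 0))
       - (\<Sum>v<lam. (if v = lam - 1 - j \<and> j < lam then alpha_coef lam v n else 0))"
    unfolding Gr_def coeff_sum sum_subtractf[symmetric]
    by (rule sum.cong) (auto simp: coeff_monom)
  also have "(\<Sum>v<lam. (if v = j - (n + lam) \<and> n + lam \<le> j then alpha_coef lam v n else 0))
      = (if n + lam \<le> j \<and> j < n + 2 * lam then alpha_coef lam (j - (n + lam)) n else 0)"
  proof (cases "n + lam \<le> j")
    case True
    hence "(\<Sum>v<lam. (if v = j - (n + lam) \<and> n + lam \<le> j then alpha_coef lam v n else 0))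
        = (\<Sum>v<lam. (if v = j - (n + lam) then alpha_coef lam v n else 0))" by simp
    also have "\<dots> = (if j - (n + lam) \<in> {..<lam} then alpha_coef lam (j - (n + lam)) n else 0)"
      by (rule sum.delta) simp
    finally show ?thesis using True by auto
  qed simp
  also have "(\<Sum>v<lam. (if v = lam - 1 - j \<and> j < lam then alpha_coef lam v n else 0))
      = (if j < lam then alpha_coef lam (lam - 1 - j) n else 0)"
  proof (cases "j < lam")
    case True
    hence "(\<Sum>v<lam. (if v = lam - 1 - j \<and> j < lam then alpha_coef lam v n else 0))
        = (\<Sum>v<lam. (if v = lam - 1 - j then alpha_coef lam v n else 0))" by simp
    also have "\<dots> = (if lam - 1 - j \<in> {..<lam} then alpha_coef lam (lam - 1 - j) n else 0)"
      by (rule sum.delta) simp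
    finally show ?thesis using True by auto
  qed simp
  finally show ?thesis unfolding gc_def by auto
qed

lemma alpha_top: "lam \<ge> 1 \<Longrightarrow> alpha_coef lam lam n = 0"
proof -
  assume "lam \<ge> 1"
  have "pochhammer (1 - real lam) lam = 0"
    using \<open>lam \<ge> 1\<close> by (subst pochhammer_eq_0_iff) (auto intro!: exI[of _ "lam - 1"] simp: of_nat_diff)
  thus ?thesis by (simp add: alpha_coef_def)
qed

lemma alpha_0 [simp]: "alpha_coef lam 0 n = 1"
  by (simp add: alpha_coef_def)

lemma alpha_step:
  fixes L n v :: nat
  assumes "L \<ge> 1"
  shows "(2 * real v + real n + 1 - 2 * real L) * (if v \<ge> 1 then alpha_coef L (v - 1) (Suc n) else 0)
         - (2 * real v + real n + 2 * real L + 1) * alpha_coef L v (Suc n)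
       = - (2 * real L + real n + 1) * alpha_coef (Suc L) v n"
proof (cases v)
  case 0
  thus ?thesis by simp
next
  case (Suc u)
  define c where "c = pochhammer (1 - real L) u"
  define p where "p = pochhammer (real n + 2) u"
  define q where "q = pochhammer (real n + real L + 2) u"
  have q0: "q > 0" unfolding q_def by (intro pochhammer_pos) auto
  have q1: "real n + real L + 2 + real u > 0" by simp
  have A0: "alpha_coef L u (Suc n) = c * p / (fact u * q)"
    by (simp add: alpha_coef_def c_def p_def q_def add_ac)
  have A1: "alpha_coef L (Suc u) (Suc n) = c * (1 - real L + real u) * (p * (real n + 2 + real u)) / (fact u * (real u + 1) * (q * (real n + real L + 2 + real u)))"
    by (simp add: alpha_coef_def c_def p_def q_def pochhammer_Suc add_ac fact_Suc algebra_simps)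
  have B1: "alpha_coef (Suc L) (Suc u) n = (- real L) * c * ((real n + 1) * p) / (fact u * (real u + 1) * (q * (real n + real L + 2 + real u)))"
  proof -
    have "pochhammer (1 - real (Suc L)) (Suc u) = (- real L) * c"
      by (simp add: pochhammer_rec c_def)
    moreover have "pochhammer (real n + 1) (Suc u) = (real n + 1) * p"
      by (simp add: pochhammer_rec p_def add_ac)
    moreover have "pochhammer (real n + real (Suc L) + 1) (Suc u) = q * (real n + real L + 2 + real u)"
      by (simp add: pochhammer_Suc q_def add_ac)
    ultimately show ?thesis by (simp add: alpha_coef_def fact_Suc algebra_simps)
  qed
  have poly: "(2 * real u + real n + 3 - 2 * real L) * (real u + 1) * (real n + real L + 2 + real u)
      - (2 * real u + real n + 2 * real L + 3) * (1 - real L + real u) * (real n + 2 + real u)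
      = (2 * real L + real n + 1) * real L * (real n + 1)"
    by (simp add: algebra_simps)
  have fq: "fact u * (real u + 1) * (q * (real n + real L + 2 + real u)) > 0"
    using q0 by (intro mult_pos_pos) auto
  define DD where "DD = fact u * (real u + 1) * (q * (real n + real L + 2 + real u))"
  have DD: "DD = (fact u * q) * ((real u + 1) * (real n + real L + 2 + real u))" by (simp add: DD_def algebra_simps)
  have A0': "alpha_coef L u (Suc n) = c * p * ((real u + 1) * (real n + real L + 2 + real u)) / DD"
    unfolding A0 DD by (rule nonzero_mult_divide_mult_cancel_right[symmetric]) simp
  have DD0: "DD \<noteq> 0" using fq unfolding DD_def by linarith
  have e1: "((2 * real (Suc u) + real n + 1 - 2 * real L) * alpha_coef L u (Suc n)
         - (2 * real (Suc u) + real n + 2 * real L + 1) * alpha_coef L (Suc u) (Suc n)) * DD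
       = c * p * ((2 * real u + real n + 3 - 2 * real L) * (real u + 1) * (real n + real L + 2 + real u)
      - (2 * real u + real n + 2 * real L + 3) * (1 - real L + real u) * (real n + 2 + real u))"
    unfolding A0' A1 DD_def[symmetric] using DD0 by (simp add: field_simps)
  have e2: "(- (2 * real L + real n + 1) * alpha_coef (Suc L) (Suc u) n) * DD = c * p * ((2 * real L + real n + 1) * real L * (real n + 1))"
    unfolding B1 DD_def[symmetric] using DD0 by (simp add: field_simps)
  have "(2 * real (Suc u) + real n + 1 - 2 * real L) * alpha_coef L u (Suc n)
         - (2 * real (Suc u) + real n + 2 * real L + 1) * alpha_coef L (Suc u) (Suc n)
       = - (2 * real L + real n + 1) * alpha_coef (Suc L) (Suc u) n"
    using e1 e2 poly DD0 by (metis mult_right_cancel)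
  thus ?thesis using Suc by simp
qed

definition Qr :: "nat \<Rightarrow> nat \<Rightarrow> real poly" where
  "Qr lam n = (\<Sum>k\<le>n. monom (ac lam n k) k)"

lemma coeff_Qr: "coeff (Qr lam n) j = (if j \<le> n then ac lam n j else 0)"
  unfolding Qr_def coeff_sum by (simp add: coeff_monom sum.delta)

lemma coeff_X1_mult: "coeff ([:-1, 1:] * p) j = (if j = 0 then 0 else coeff p (j - 1)) - coeff (p :: real poly) j"
  by (cases j) (simp_all add: coeff_pCons)

lemma QD: "smult (real L) ([:-1, 1:] * Qr (Suc L) n) =
   smult 2 (pCons 0 (pderiv (Qr L (Suc n)))) - smult (real (Suc n)) (Qr L (Suc n))"
proof (rule poly_eqI)
  fix j
  show "coeff (smult (real L) ([:-1, 1:] * Qr (Suc L) n)) j =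
        coeff (smult 2 (pCons 0 (pderiv (Qr L (Suc n)))) - smult (real (Suc n)) (Qr L (Suc n))) j"
  proof (cases "j \<le> Suc n")
    case True
    have k: "(real (Suc n) - 2 * real j) * ac L (Suc n) j =
         real L * ((if j \<le> n then ac (Suc L) n j else 0) - (if j \<ge> 1 then ac (Suc L) n (j - 1) else 0))"
      by (rule key_coef[OF True])
    show ?thesis
    proof (cases j)
      case 0
      thus ?thesis using k by (simp add: coeff_X1_mult coeff_Qr coeff_pderiv algebra_simps)
    next
      case (Suc i)
      thus ?thesis using k True by (simp add: coeff_X1_mult coeff_Qr coeff_pderiv algebra_simps)
    qed
  next
    case False
    thus ?thesis by (cases j) (simp_all add: coeff_X1_mult coeff_Qr coeff_pderiv)
  qed
qed

definition kap :: "nat \<Rightarrow> nat \<Rightarrow> real" where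
  "kap lam n = (-1) ^ (lam - 1) * real (n + 2 * lam - 1 choose (lam - 1))"

lemma kap_rel: "real (Suc d) * kap (Suc (Suc d)) n = - (2 * real (Suc d) + real n + 1) * kap (Suc d) (Suc n)"
proof -
  have nat1: "n + 2 * Suc (Suc d) - 1 = Suc (n + 2 * Suc d)" by simp
  have nat2: "Suc n + 2 * Suc d - 1 = n + 2 * Suc d" by simp
  have b: "Suc d * (Suc (n + 2 * Suc d) choose Suc d) = Suc (n + 2 * Suc d) * (n + 2 * Suc d choose d)"
    using binomial_absorption[of d "Suc (n + 2 * Suc d)"] by (simp only: diff_Suc_1)
  have b': "real (Suc d) * real (Suc (n + 2 * Suc d) choose Suc d) = real (Suc (n + 2 * Suc d)) * real (n + 2 * Suc d choose d)"
    using arg_cong[OF b, of real] by (simp only: of_nat_mult)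
  have r: "real (Suc (n + 2 * Suc d)) = 2 * real (Suc d) + real n + 1" by simp
  have gen: "\<And>C1 C2 x y :: real. x * C1 = y * C2 \<Longrightarrow> x * ((-1) ^ Suc d * C1) = - y * ((-1) ^ d * C2)"
    by (simp add: algebra_simps)
  show ?thesis unfolding kap_def nat1 nat2 diff_Suc_1
    by (rule gen) (use b' r in simp)
qed

lemma kap_nz: "kap lam n \<noteq> 0"
  by (simp add: kap_def)

definition Op :: "nat \<Rightarrow> nat \<Rightarrow> real poly \<Rightarrow> real poly" where
  "Op L n F = smult 2 (pCons 0 ([:-1, 1:] * pderiv F - smult (2 * real L - 1) F)) - smult (real (Suc n)) ([:-1, 1:] * F)"

lemma Op_smult: "Op L n (smult c F) = smult c (Op L n F)"
proof (rule poly_eqI)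
  fix j show "coeff (Op L n (smult c F)) j = coeff (smult c (Op L n F)) j"
    by (cases j) (simp_all add: Op_def coeff_X1_mult coeff_pderiv coeff_pCons pderiv_smult algebra_simps split: nat.split)
qed

lemma coeff_Op_0: "coeff (Op L n G) 0 = real (Suc n) * coeff G 0"
  by (simp add: Op_def coeff_X1_mult)

lemma coeff_Op_Suc: "coeff (Op L n G) (Suc i) =
   (2 * real i - 4 * real L + 1 - real n) * coeff G i + (real n - 1 - 2 * real i) * coeff G (Suc i)"
  by (cases i) (simp_all add: Op_def coeff_X1_mult coeff_pderiv algebra_simps)

lemma gc_low: "j < lam \<Longrightarrow> gc lam n j = - alpha_coef lam (lam - 1 - j) n"
  by (simp add: gc_def)
lemma gc_high: "n + lam \<le> j \<Longrightarrow> j < n + 2 * lam \<Longrightarrow> gc lam n j = alpha_coef lam (j - (n + lam)) n"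
  by (simp add: gc_def)
lemma gc_mid: "lam \<le> j \<Longrightarrow> j < n + lam \<Longrightarrow> gc lam n j = 0"
  by (simp add: gc_def)
lemma gc_top: "n + 2 * lam \<le> j \<Longrightarrow> gc lam n j = 0"
  by (simp add: gc_def)

lemma Op_Gr_coeff:
  assumes L: "L \<ge> 1"
  shows "coeff (Op L n (Gr L (Suc n))) j = - (2 * real L + real n + 1) * gc (Suc L) n j"
proof (cases j)
  case 0
  have st: "(2 * real L + real n + 1 - 2 * real L) * (if L \<ge> 1 then alpha_coef L (L - 1) (Suc n) else 0)
         - (2 * real L + real n + 2 * real L + 1) * alpha_coef L L (Suc n)
       = - (2 * real L + real n + 1) * alpha_coef (Suc L) L n"
    using alpha_step[OF L, of L n] by simp
  show ?thesis using L st alpha_top[OF L]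
    by (simp add: 0 coeff_Op_0 coeff_Gr gc_low add.commute)
next
  case (Suc i)
  show ?thesis
  proof (cases "Suc i \<le> L")
    case True
    define mu where "mu = L - Suc i"
    have imu: "i + mu + 1 = L" using True by (simp add: mu_def)
    have st: "(2 * real mu + real n + 1 - 2 * real L) * (if mu \<ge> 1 then alpha_coef L (mu - 1) (Suc n) else 0)
         - (2 * real mu + real n + 2 * real L + 1) * alpha_coef L mu (Suc n)
       = - (2 * real L + real n + 1) * alpha_coef (Suc L) mu n"
      by (rule alpha_step[OF L])
    have g1: "gc L (Suc n) i = - alpha_coef L mu (Suc n)" using True imu by (simp add: gc_low mu_def)
    have g2: "gc L (Suc n) (Suc i) = - (if mu \<ge> 1 then alpha_coef L (mu - 1) (Suc n) else 0)"
    proof (cases "mu \<ge> 1")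
      case True thus ?thesis using imu by (simp add: gc_low mu_def)
    next
      case False thus ?thesis using imu by (simp add: gc_mid)
    qed
    have g3: "gc (Suc L) n (Suc i) = - alpha_coef (Suc L) mu n" using True imu by (simp add: gc_low mu_def)
    have ri: "real i = real L - real mu - 1" using imu by simp
    show ?thesis unfolding Suc coeff_Op_Suc coeff_Gr g1 g2 g3 using st unfolding ri
      by (simp add: algebra_simps)
  next
    case False
    show ?thesis
    proof (cases "Suc i \<le> n + L")
      case True
      thus ?thesis using False by (simp add: Suc coeff_Op_Suc coeff_Gr gc_mid)
    next
      case False2: False
      show ?thesis
      proof (cases "Suc i \<le> n + 2 * L + 1")
        case True
        define nu where "nu = i - (n + L)"
        have inu: "i = nu + n + L" using False2 by (simp add: nu_def)
        have st: "(2 * real nu + real n + 1 - 2 * real L) * (if nu \<ge> 1 then alpha_coef L (nu - 1) (Suc n) else 0)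
             - (2 * real nu + real n + 2 * real L + 1) * alpha_coef L nu (Suc n)
           = - (2 * real L + real n + 1) * alpha_coef (Suc L) nu n"
          by (rule alpha_step[OF L])
        have g1: "gc L (Suc n) i = (if nu \<ge> 1 then alpha_coef L (nu - 1) (Suc n) else 0)"
        proof (cases "nu \<ge> 1")
          case True thus ?thesis using inu \<open>Suc i \<le> n + 2 * L + 1\<close> by (simp add: gc_high)
        next
          case False thus ?thesis using inu L by (simp add: gc_mid)
        qed
        have g2: "gc L (Suc n) (Suc i) = alpha_coef L nu (Suc n)"
        proof (cases "nu = L")
          case True thus ?thesis using inu alpha_top[OF L] by (simp add: gc_top)
        next
          case False thus ?thesis using inu \<open>Suc i \<le> n + 2 * L + 1\<close> by (simp add: gc_high)
        qed
        have g3: "gc (Suc L) n (Suc i) = alpha_coef (Suc L) nu n" using inu True by (simp add: gc_high)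
        have ri: "real i = real nu + real n + real L" using inu by simp
        show ?thesis unfolding Suc coeff_Op_Suc coeff_Gr g1 g2 g3 using st unfolding ri
          by (simp add: algebra_simps)
      next
        case False
        thus ?thesis by (simp add: Suc coeff_Op_Suc coeff_Gr gc_top)
      qed
    qed
  qed
qed

lemma Op_Gr: "L \<ge> 1 \<Longrightarrow> Op L n (Gr L (Suc n)) = smult (- (2 * real L + real n + 1)) (Gr (Suc L) n)"
  by (rule poly_eqI) (simp add: Op_Gr_coeff coeff_Gr)

lemma main_poly_base: "[:-1, 1:] * Qr 1 n = Gr 1 n"
proof (rule poly_eqI)
  fix j
  show "coeff ([:-1, 1:] * Qr 1 n) j = coeff (Gr 1 n) j"
    by (cases j) (auto simp: coeff_X1_mult coeff_Qr coeff_Gr gc_def ac_def)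
qed

lemma main_poly:
  assumes "lam \<ge> 1"
  shows "[:-1, 1:] ^ (2 * lam - 1) * Qr lam n = smult (kap lam n) (Gr lam n)"
proof -
  obtain d where d: "lam = Suc d" using assms by (cases lam) auto
  have "\<forall>n. [:-1, 1:] ^ (2 * Suc d - 1) * Qr (Suc d) n = smult (kap (Suc d) n) (Gr (Suc d) n)"
  proof (induction d)
    case 0
    show ?case using main_poly_base by (simp add: kap_def)
  next
    case (Suc d)
    show ?case
    proof
      fix n
      define L where "L = Suc d"
      define m where "m = 2 * L - 2"
      define X1 where "X1 = ([:-1, 1:] :: real poly)"
      define Q where "Q = Qr L (Suc n)"
      define F where "F = X1 ^ Suc m * Q"
      have L1: "L \<ge> 1" by (simp add: L_def)
      have m1: "2 * L - 1 = Suc m" "2 * L = Suc (Suc m)" "2 * Suc L - 1 = Suc (Suc (Suc m))"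
        by (simp_all add: m_def L_def)
      have IH0: "[:-1, 1:] ^ (2 * Suc d - 1) * Qr (Suc d) (Suc n) = smult (kap (Suc d) (Suc n)) (Gr (Suc d) (Suc n))"
        using Suc.IH by (rule spec)
      have sm: "Suc m = 2 * Suc d - 1" by (simp add: m_def L_def)
      have IH: "F = smult (kap L (Suc n)) (Gr L (Suc n))"
        unfolding F_def Q_def X1_def L_def sm by (rule IH0)
      have dX: "pderiv X1 = 1" by (simp add: X1_def pderiv_pCons)
      have pF: "pderiv F = X1 ^ Suc m * pderiv Q + smult (real (Suc m)) (X1 ^ m * Q)"
        unfolding F_def pderiv_mult pderiv_power_Suc dX by (simp add: algebra_simps)
      have e1: "X1 * pderiv F - smult (2 * real L - 1) F = X1 ^ Suc (Suc m) * pderiv Q"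
      proof -
        have "real (Suc m) = real (2 * L - 1)" using m1(1) by simp
        also have "\<dots> = 2 * real L - 1" using L1 by (simp add: of_nat_diff)
        finally have rs: "real (Suc m) = 2 * real L - 1" .
        show ?thesis unfolding pF rs by (simp add: F_def algebra_simps)
      qed
      have e2: "X1 * F = X1 ^ Suc (Suc m) * Q" by (simp add: F_def)
      have "smult (real L) (X1 ^ (2 * Suc L - 1) * Qr (Suc L) n) = X1 ^ Suc (Suc m) * smult (real L) (X1 * Qr (Suc L) n)"
        unfolding m1(3) by (simp add: algebra_simps)
      also have "\<dots> = X1 ^ Suc (Suc m) * (smult 2 (pCons 0 (pderiv Q)) - smult (real (Suc n)) Q)"
        unfolding X1_def Q_def QD ..
      also have "\<dots> = Op L n F"
        unfolding Op_def X1_def[symmetric] e1 e2 by (simp add: algebra_simps smult_diff_right)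
      also have "\<dots> = smult (kap L (Suc n)) (smult (- (2 * real L + real n + 1)) (Gr (Suc L) n))"
        unfolding IH Op_smult Op_Gr[OF L1] ..
      also have "\<dots> = smult (real L) (smult (kap (Suc L) n) (Gr (Suc L) n))"
      proof -
        have h: "real L * kap (Suc L) n = - (2 * real L + real n + 1) * kap L (Suc n)"
          unfolding L_def by (rule kap_rel)
        have kk: "kap L (Suc n) * (- (2 * real L + real n + 1)) = real L * kap (Suc L) n"
          unfolding h by (rule mult.commute)
        show ?thesis unfolding smult_smult kk ..
      qed
      finally have eq: "smult (real L) (X1 ^ (2 * Suc L - 1) * Qr (Suc L) n) = smult (real L) (smult (kap (Suc L) n) (Gr (Suc L) n))" .
      have nz: "real L \<noteq> 0" using L1 by simp
      have "X1 ^ (2 * Suc L - 1) * Qr (Suc L) n = smult (kap (Suc L) n) (Gr (Suc L) n)"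
        by (rule smult_cancel[OF nz eq])
      thus "[:-1, 1:] ^ (2 * Suc (Suc d) - 1) * Qr (Suc (Suc d)) n = smult (kap (Suc (Suc d)) n) (Gr (Suc (Suc d)) n)"
        by (simp add: X1_def L_def)
    qed
  qed
  thus ?thesis unfolding d by (rule spec)
qed

abbreviation cmp :: "real poly \<Rightarrow> complex poly" where
  "cmp p \<equiv> map_poly complex_of_real p"

lemma cmp_add: "cmp (p + q) = cmp p + cmp q"
  by (rule poly_eqI) (simp add: coeff_map_poly)
lemma cmp_diff: "cmp (p - q) = cmp p - cmp q"
  by (rule poly_eqI) (simp add: coeff_map_poly)
lemma cmp_mult: "cmp (p * q) = cmp p * cmp q"
  by (rule poly_eqI) (simp add: coeff_map_poly coeff_mult)
lemma cmp_power: "cmp (p ^ k) = cmp p ^ k"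
  by (induction k) (simp_all add: cmp_mult)
lemma cmp_smult: "cmp (smult c p) = smult (complex_of_real c) (cmp p)"
  by (rule poly_eqI) (simp add: coeff_map_poly)
lemma cmp_sum: "cmp (sum f A) = (\<Sum>x\<in>A. cmp (f x))"
  by (induction A rule: infinite_finite_induct) (simp_all add: cmp_add)
lemma cmp_monom: "cmp (monom c k) = monom (complex_of_real c) k"
  by (simp add: map_poly_monom)

lemma poly_cmp_Qr: "poly (cmp (Qr lam n)) w = (\<Sum>k\<le>n. complex_of_real (ac lam n k) * w ^ k)"
  by (simp add: Qr_def cmp_sum cmp_monom poly_sum poly_monom)

lemma poly_cmp_Gr: "poly (cmp (Gr lam n)) w =
   (\<Sum>v<lam. complex_of_real (alpha_coef lam v n) * (w ^ (n + lam + v) - w ^ (lam - 1 - v)))"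
  by (simp add: Gr_def cmp_sum cmp_monom cmp_smult cmp_diff poly_sum poly_monom)

lemma gpoly_Gr: assumes "lam \<ge> 1" shows "gpoly lam n z = poly (cmp (Gr lam n)) (z ^ 2)"
proof -
  have "{0..lam - 1} = {..<lam}" using assms by auto
  moreover have "\<And>v. v < lam \<Longrightarrow> z ^ (2 * n + 2 * lam + 2 * v) - z ^ (2 * lam - 2 * v - 2) = (z ^ 2) ^ (n + lam + v) - (z ^ 2) ^ (lam - 1 - v)"
    by (simp add: power_mult[symmetric] algebra_simps diff_mult_distrib2)
  ultimately show ?thesis unfolding gpoly_def poly_cmp_Gr by (intro sum.cong) auto
qed

lemma cmp_X1: "cmp [:-1, 1:] = [:-1, 1:]"
  by (rule poly_eqI) (simp add: coeff_map_poly coeff_pCons split: nat.split)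

lemma main_complex:
  assumes "lam \<ge> 1"
  shows "(w - 1) ^ (2 * lam - 1) * poly (cmp (Qr lam n)) w = complex_of_real (kap lam n) * poly (cmp (Gr lam n)) w"
proof -
  have "cmp ([:-1, 1:] ^ (2 * lam - 1) * Qr lam n) = cmp (smult (kap lam n) (Gr lam n))"
    using main_poly[OF assms] by simp
  hence "poly (cmp ([:-1, 1:] ^ (2 * lam - 1) * Qr lam n)) w = poly (cmp (smult (kap lam n) (Gr lam n))) w" by simp
  thus ?thesis by (simp add: cmp_mult cmp_power cmp_smult cmp_X1)
qed

lemma poly_roots_prod:
  fixes p :: "complex poly"
  assumes "finite S" "card S = degree p" "\<forall>x\<in>S. poly p x = 0"
  shows "p = smult (lead_coeff p) (\<Prod>x\<in>S. [:-x, 1:])"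
  using assms
proof (induction S arbitrary: p rule: finite_induct)
  case empty
  hence "degree p = 0" by simp
  thus ?case by (metis degree_0_id mult.right_neutral prod.empty smult_1_left smult_one)
next
  case (insert x S)
  have "poly p x = 0" using insert.prems by simp
  then obtain q where q: "p = [:-x, 1:] * q" using poly_eq_0_iff_dvd by (metis dvdE)
  have p0: "p \<noteq> 0" using insert by auto
  hence q0: "q \<noteq> 0" using q by auto
  have "degree p = degree [:-x, 1:] + degree q" unfolding q by (rule degree_mult_eq) (use q0 in auto)
  hence dq: "degree p = Suc (degree q)" by simp
  have "card S = degree q" using insert dq by simp
  moreover have "\<forall>y\<in>S. poly q y = 0"
  proof
    fix y assume y: "y \<in> S"
    hence "poly p y = 0" using insert.prems by simp
    hence "(y - x) * poly q y = 0" using q by auto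
    moreover have "y \<noteq> x" using y insert.hyps by auto
    ultimately show "poly q y = 0" by simp
  qed
  ultimately have IH: "q = smult (lead_coeff q) (\<Prod>x\<in>S. [:-x, 1:])" using insert.IH insert.hyps by blast
  have "lead_coeff p = lead_coeff q" unfolding q lead_coeff_mult by (simp del: mult_pCons_left)
  hence "p = [:-x, 1:] * smult (lead_coeff p) (\<Prod>x\<in>S. [:-x, 1:])" using q IH by simp
  also have "\<dots> = smult (lead_coeff p) (\<Prod>x\<in>insert x S. [:-x, 1:])"
    using insert.hyps by (simp add: algebra_simps)
  finally show ?case .
qed

lemma cis_inj: assumes "0 \<le> a" "a < b" "b < 2 * pi" shows "cis a \<noteq> cis b"
proof
  assume "cis a = cis b"
  hence "cis (b - a) = 1" by (simp flip: cis_divide)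
  hence "cos (b - a) = 1" by (metis cis.sel(1) one_complex.sel(1))
  then obtain k :: int where k: "b - a = real_of_int k * 2 * pi" using cos_one_2pi_int by blast
  have "0 < b - a" using assms by simp
  hence "0 < real_of_int k * 2 * pi" unfolding k .
  hence "k > 0" by (simp add: zero_less_mult_iff)
  moreover have "b - a < 2 * pi" using assms by simp
  hence "real_of_int k * 2 * pi < 2 * pi" unfolding k .
  hence "k < 1" by simp
  ultimately show False by simp
qed

lemma coeff_cmp_Qr: "coeff (cmp (Qr lam n)) j = complex_of_real (if j \<le> n then ac lam n j else 0)"
  by (simp add: coeff_map_poly coeff_Qr)

lemma Q_factor:
  assumes lam: "lam \<ge> 1"
  shows "\<exists>t. (\<forall>i<n. 0 < t i \<and> t i < pi) \<and> (\<forall>i j. i < j \<longrightarrow> j < n \<longrightarrow> t i < t j) \<and>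
             (\<forall>w. poly (cmp (Qr lam n)) w = complex_of_real (PC lam n) * (\<Prod>i<n. w - cis (2 * t i)))"
proof -
  obtain t where t: "\<forall>i<n. 0 < t i \<and> t i < pi \<and> hh lam n (t i) = 0"
      and mono: "\<forall>i j. i < j \<longrightarrow> j < n \<longrightarrow> t i < t j"
    using hh_zeros[OF lam] by blast
  define p where "p = cmp (Qr lam n)"
  have PCn: "PC lam n > 0" using lam by (intro PC_pos) simp
  have acn: "ac lam n n = PC lam n" by (simp add: ac_def)
  have dp: "degree p = n"
  proof (rule antisym)
    show "degree p \<le> n" by (rule degree_le) (simp add: p_def coeff_cmp_Qr)
    show "n \<le> degree p" by (rule le_degree) (use PCn in \<open>simp add: p_def coeff_cmp_Qr acn\<close>)
  qed
  have lp: "lead_coeff p = complex_of_real (PC lam n)" using dp by (simp add: p_def coeff_cmp_Qr acn)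
  define w where "w i = cis (2 * t i)" for i
  have inj: "inj_on w {..<n}"
  proof (rule inj_onI)
    fix i j assume ij: "i \<in> {..<n}" "j \<in> {..<n}" "w i = w j"
    show "i = j"
    proof (rule ccontr)
      assume "i \<noteq> j"
      hence "i < j \<or> j < i" by auto
      thus False
      proof
        assume "i < j"
        hence "2 * t i < 2 * t j" using mono ij by auto
        moreover have "0 \<le> 2 * t i" "2 * t j < 2 * pi" using t ij by (auto simp: less_imp_le)
        ultimately show False using cis_inj[of "2 * t i" "2 * t j"] ij by (simp add: w_def)
      next
        assume "j < i"
        hence "2 * t j < 2 * t i" using mono ij by auto
        moreover have "0 \<le> 2 * t j" "2 * t i < 2 * pi" using t ij by (auto simp: less_imp_le)
        ultimately show False using cis_inj[of "2 * t j" "2 * t i"] ij by (simp add: w_def)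
      qed
    qed
  qed
  have roots: "\<forall>x\<in>w ` {..<n}. poly p x = 0"
  proof
    fix x assume "x \<in> w ` {..<n}"
    then obtain i where i: "i < n" "x = w i" by auto
    have "complex_of_real (gegenbauer lam n (cos (t i))) = 0"
      using t i gegenbauer_hh[of lam n "t i"] lam by simp
    hence "cis (- (real n * t i)) * (\<Sum>k\<le>n. complex_of_real (ac lam n k) * cis (2 * t i) ^ k) = 0"
      using gegenbauer_Q[of lam n "t i"] lam by simp
    hence "(\<Sum>k\<le>n. complex_of_real (ac lam n k) * cis (2 * t i) ^ k) = 0" by simp
    thus "poly p x = 0" by (simp add: p_def poly_cmp_Qr i w_def)
  qed
  have "p = smult (lead_coeff p) (\<Prod>x\<in>w ` {..<n}. [:-x, 1:])"
    by (rule poly_roots_prod) (use inj dp roots in \<open>simp_all add: card_image\<close>)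
  hence pe: "poly p z = lead_coeff p * (\<Prod>x\<in>w ` {..<n}. poly [:-x, 1:] z)" for z
    by (metis poly_smult poly_prod)
  have "\<forall>z. poly p z = complex_of_real (PC lam n) * (\<Prod>i<n. z - w i)"
  proof
    fix z
    have "(\<Prod>x\<in>w ` {..<n}. poly [:-x, 1:] z) = (\<Prod>i<n. poly [:-w i, 1:] z)"
      by (rule prod.reindex[OF inj, unfolded comp_def])
    thus "poly p z = complex_of_real (PC lam n) * (\<Prod>i<n. z - w i)" using pe[of z] lp by simp
  qed
  thus ?thesis using t mono unfolding p_def w_def by blast
qed

definition Hs :: "real \<Rightarrow> real" where "Hs s = s * ln (4 * s ^ 2)"

lemma Hs_tendsto0: "(Hs \<longlongrightarrow> 0) (at 0)"
proof -
  have r: "((\<lambda>s::real. s * ln (4 * s ^ 2)) \<longlongrightarrow> 0) (at_right 0)" by real_asymp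
  have l: "((\<lambda>s::real. s * ln (4 * s ^ 2)) \<longlongrightarrow> 0) (at_left 0)" by real_asymp
  show ?thesis unfolding Hs_def using r l by (simp add: filterlim_split_at)
qed

lemma isCont_Hs: "isCont Hs s"
proof (cases "s = 0")
  case True
  thus ?thesis using Hs_tendsto0 by (simp add: isCont_def Hs_def)
next
  case False
  hence "4 * s ^ 2 > 0" by simp
  thus ?thesis unfolding Hs_def by (intro continuous_intros) auto
qed

definition Fd :: "real \<Rightarrow> real" where "Fd u = ln (4 * (sin u) ^ 2)"

lemma Hs_sin: "Hs (sin u) = sin u * Fd u" by (simp add: Hs_def Fd_def)

lemma T1: "sin (2 * real m * u) = sin u * (2 * (\<Sum>j<m. cos ((2 * real j + 1) * u)))"
proof (induction m)
  case 0 thus ?case by simp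
next
  case (Suc m)
  have "sin (2 * real (Suc m) * u) = sin ((2 * real m + 1) * u + u)" by (simp add: algebra_simps)
  also have "\<dots> = sin ((2 * real m + 1) * u - u) + 2 * sin u * cos ((2 * real m + 1) * u)"
    by (simp add: sin_add sin_diff)
  also have "sin ((2 * real m + 1) * u - u) = sin (2 * real m * u)" by (simp add: algebra_simps)
  finally show ?case using Suc by (simp add: algebra_simps)
qed

lemma T2: "1 - cos (2 * real m * u) = sin u * (2 * (\<Sum>j<m. sin ((2 * real j + 1) * u)))"
proof (induction m)
  case 0 thus ?case by simp
next
  case (Suc m)
  have "cos (2 * real (Suc m) * u) = cos ((2 * real m + 1) * u + u)" by (simp add: algebra_simps)
  also have "\<dots> = cos ((2 * real m + 1) * u - u) - 2 * sin u * sin ((2 * real m + 1) * u)"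
    by (simp add: cos_add cos_diff)
  also have "cos ((2 * real m + 1) * u - u) = cos (2 * real m * u)" by (simp add: algebra_simps)
  finally show ?case using Suc by (simp add: algebra_simps)
qed

lemma J1: "((\<lambda>u. cos (2 * real k * u)) has_integral (if k = 0 then pi else 0)) {0..pi}"
proof (cases "k = 0")
  case True thus ?thesis using has_integral_const_real[of "1::real" 0 pi] by simp
next
  case False
  have "((\<lambda>u. cos (2 * real k * u)) has_integral (sin (2 * real k * pi) / (2 * real k) - sin (2 * real k * 0) / (2 * real k))) {0..pi}"
  proof (rule fundamental_theorem_of_calculus)
    fix x :: real assume "x \<in> {0..pi}"
    show "((\<lambda>u. sin (2 * real k * u) / (2 * real k)) has_vector_derivative cos (2 * real k * x)) (at x within {0..pi})"
      unfolding has_real_derivative_iff_has_vector_derivative[symmetric]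
      using False by (auto intro!: derivative_eq_intros)
  qed simp
  moreover have "sin (2 * real k * pi) = 0"
    using sin_npi[of "2 * k"] by (simp add: mult.assoc)
  ultimately show ?thesis using False by simp
qed

lemma J2: "((\<lambda>u. sin (2 * real k * u)) has_integral 0) {0..pi}"
proof (cases "k = 0")
  case True thus ?thesis by simp
next
  case False
  have "((\<lambda>u. sin (2 * real k * u)) has_integral ((- cos (2 * real k * pi) / (2 * real k)) - (- cos (2 * real k * 0) / (2 * real k)))) {0..pi}"
  proof (rule fundamental_theorem_of_calculus)
    fix x :: real assume "x \<in> {0..pi}"
    show "((\<lambda>u. - cos (2 * real k * u) / (2 * real k)) has_vector_derivative sin (2 * real k * x)) (at x within {0..pi})"
      unfolding has_real_derivative_iff_has_vector_derivative[symmetric]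
      using False by (auto intro!: derivative_eq_intros)
  qed simp
  moreover have "cos (2 * real k * pi) = 1"
    using cos_npi[of "2 * k"] by (simp add: mult.assoc)
  ultimately show ?thesis by simp
qed

lemma Fd_pi [simp]: "Fd pi = 0" and Fd_0 [simp]: "Fd 0 = 0" by (simp_all add: Fd_def)

lemma isCont_Hs_sin: "isCont (\<lambda>u. Hs (sin u)) x"
  by (rule isCont_o2[OF _ isCont_Hs]) (intro continuous_intros)

lemma deriv_Fd: "sin x \<noteq> 0 \<Longrightarrow> (Fd has_real_derivative (2 * cos x / sin x)) (at x)"
proof -
  assume s: "sin x \<noteq> 0"
  have "(Fd has_real_derivative (4 * (2 * sin x * cos x)) / (4 * (sin x)^2)) (at x)"
  proof -
    have "4 * (sin x)^2 > 0" using s by simp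
    thus ?thesis unfolding Fd_def using s by (auto intro!: derivative_eq_intros simp: power2_eq_square)
  qed
  moreover have "(4 * (2 * sin x * cos x)) / (4 * (sin x)^2) = 2 * cos x / sin x"
    using s by (simp add: power2_eq_square field_simps)
  ultimately show ?thesis by simp
qed

lemma sum_trig_int:
  assumes "m \<ge> 1"
  shows "((\<lambda>x. \<Sum>j<m. 2 * (cos (2 * real (Suc j) * x) + cos (2 * real j * x))) has_integral 2 * pi) {0..pi}"
proof -
  have "((\<lambda>x. \<Sum>j<m. 2 * (cos (2 * real (Suc j) * x) + cos (2 * real j * x))) has_integral
        (\<Sum>j<m. 2 * ((if Suc j = 0 then pi else 0) + (if j = 0 then pi else 0)))) {0..pi}"
    by (intro has_integral_sum has_integral_mult_right has_integral_add J1) auto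
  moreover have "(\<Sum>j<m. 2 * ((if Suc j = 0 then pi else 0) + (if j = 0 then pi else (0::real)))) = 2 * pi"
  proof -
    have "(\<Sum>j<m. 2 * ((if Suc j = 0 then pi else 0) + (if j = 0 then pi else (0::real)))) = (\<Sum>j<m. if j = 0 then 2 * pi else 0)"
      by (rule sum.cong) auto
    also have "\<dots> = 2 * pi" using assms by (simp add: sum.delta)
    finally show ?thesis .
  qed
  ultimately show ?thesis by simp
qed

lemma I1:
  assumes m: "m \<ge> 1"
  shows "((\<lambda>u. cos (2 * real m * u) * Fd u) has_integral (- pi / real m)) {0..pi}"
proof -
  define P where "P x = 2 * (\<Sum>j<m. cos ((2 * real j + 1) * x))" for x
  define G where "G x = (\<Sum>j<m. 2 * (cos (2 * real (Suc j) * x) + cos (2 * real j * x)))" for x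
  define Phi where "Phi x = sin (2 * real m * x) * Fd x" for x
  have Phi_alt: "Phi x = P x * Hs (sin x)" for x
    unfolding Phi_def T1 Hs_sin P_def by (simp add: algebra_simps)
  have cont: "continuous_on {0..pi} Phi"
    unfolding Phi_alt[abs_def] P_def
    by (intro continuous_at_imp_continuous_on ballI continuous_intros isCont_Hs_sin)
  have PG: "2 * cos x * P x = G x" for x
  proof -
    have "2 * cos x * P x = (\<Sum>j<m. 2 * (2 * cos x * cos ((2 * real j + 1) * x)))"
      by (simp add: P_def sum_distrib_left algebra_simps)
    also have "\<dots> = G x" unfolding G_def
    proof (rule sum.cong)
      fix j
      have e: "cos (a + x) + cos (a - x) = 2 * cos x * cos a" for a by (simp add: cos_add cos_diff)
      have "cos (2 * real (Suc j) * x) = cos ((2 * real j + 1) * x + x)" by (simp add: algebra_simps)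
      moreover have "cos (2 * real j * x) = cos ((2 * real j + 1) * x - x)" by (simp add: algebra_simps)
      ultimately show "2 * (2 * cos x * cos ((2 * real j + 1) * x)) = 2 * (cos (2 * real (Suc j) * x) + cos (2 * real j * x))"
        using e[of "(2 * real j + 1) * x"] by simp
    qed simp
    finally show ?thesis .
  qed
  have der: "(Phi has_vector_derivative (2 * real m * cos (2 * real m * x) * Fd x + G x)) (at x)"
    if x: "x \<in> {0<..<pi}" for x
  proof -
    have sx: "sin x > 0" using x by (intro sin_gt_zero) auto
    have "(Phi has_real_derivative (2 * real m * cos (2 * real m * x) * Fd x + sin (2 * real m * x) * (2 * cos x / sin x))) (at x)"
      unfolding Phi_def[abs_def] using sx by (auto intro!: derivative_eq_intros deriv_Fd)
    moreover have "sin (2 * real m * x) * (2 * cos x / sin x) = G x"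
      unfolding T1 PG[symmetric] P_def using sx by (simp add: field_simps)
    ultimately show ?thesis by (simp add: has_real_derivative_iff_has_vector_derivative)
  qed
  have "((\<lambda>x. 2 * real m * cos (2 * real m * x) * Fd x + G x) has_integral (Phi pi - Phi 0)) {0..pi}"
    by (rule fundamental_theorem_of_calculus_interior) (use cont der in auto)
  hence i1: "((\<lambda>x. 2 * real m * cos (2 * real m * x) * Fd x + G x) has_integral 0) {0..pi}"
    by (simp add: Phi_def)
  have i2: "(G has_integral 2 * pi) {0..pi}" unfolding G_def by (rule sum_trig_int[OF m])
  have "((\<lambda>x. (2 * real m * cos (2 * real m * x) * Fd x + G x) - G x) has_integral (0 - 2 * pi)) {0..pi}"
    by (rule has_integral_diff[OF i1 i2])
  hence "((\<lambda>x. (1 / (2 * real m)) * (2 * real m * cos (2 * real m * x) * Fd x)) has_integral (1 / (2 * real m)) * (0 - 2 * pi)) {0..pi}"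
    by (intro has_integral_mult_right) simp
  moreover have "(\<lambda>x. (1 / (2 * real m)) * (2 * real m * cos (2 * real m * x) * Fd x)) = (\<lambda>u. cos (2 * real m * u) * Fd u)"
    using m by (auto simp: field_simps)
  moreover have "(1 / (2 * real m)) * (0 - 2 * pi) = - pi / real m" using m by (simp add: field_simps)
  ultimately show ?thesis by simp
qed

lemma I2:
  assumes m: "m \<ge> 1"
  shows "((\<lambda>u. sin (2 * real m * u) * Fd u) has_integral 0) {0..pi}"
proof -
  define R where "R x = 2 * (\<Sum>j<m. sin ((2 * real j + 1) * x))" for x
  define K where "K x = (\<Sum>j<m. 2 * (sin (2 * real (Suc j) * x) + sin (2 * real j * x)))" for x
  define Psi where "Psi x = (1 - cos (2 * real m * x)) * Fd x" for x
  have Psi_alt: "Psi x = R x * Hs (sin x)" for x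
    unfolding Psi_def T2 Hs_sin R_def by (simp add: algebra_simps)
  have cont: "continuous_on {0..pi} Psi"
    unfolding Psi_alt[abs_def] R_def
    by (intro continuous_at_imp_continuous_on ballI continuous_intros isCont_Hs_sin)
  have RK: "2 * cos x * R x = K x" for x
  proof -
    have "2 * cos x * R x = (\<Sum>j<m. 2 * (2 * cos x * sin ((2 * real j + 1) * x)))"
      by (simp add: R_def sum_distrib_left algebra_simps)
    also have "\<dots> = K x" unfolding K_def
    proof (rule sum.cong)
      fix j
      have e: "sin (a + x) + sin (a - x) = 2 * cos x * sin a" for a by (simp add: sin_add sin_diff)
      have "sin (2 * real (Suc j) * x) = sin ((2 * real j + 1) * x + x)" by (simp add: algebra_simps)
      moreover have "sin (2 * real j * x) = sin ((2 * real j + 1) * x - x)" by (simp add: algebra_simps)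
      ultimately show "2 * (2 * cos x * sin ((2 * real j + 1) * x)) = 2 * (sin (2 * real (Suc j) * x) + sin (2 * real j * x))"
        using e[of "(2 * real j + 1) * x"] by simp
    qed simp
    finally show ?thesis .
  qed
  have der: "(Psi has_vector_derivative (2 * real m * sin (2 * real m * x) * Fd x + K x)) (at x)"
    if x: "x \<in> {0<..<pi}" for x
  proof -
    have sx: "sin x > 0" using x by (intro sin_gt_zero) auto
    have "(Psi has_real_derivative (2 * real m * sin (2 * real m * x) * Fd x + (1 - cos (2 * real m * x)) * (2 * cos x / sin x))) (at x)"
      unfolding Psi_def[abs_def] using sx by (auto intro!: derivative_eq_intros deriv_Fd)
    moreover have "(1 - cos (2 * real m * x)) * (2 * cos x / sin x) = K x"
      unfolding T2 RK[symmetric] R_def using sx by (simp add: field_simps)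
    ultimately show ?thesis by (simp add: has_real_derivative_iff_has_vector_derivative)
  qed
  have "((\<lambda>x. 2 * real m * sin (2 * real m * x) * Fd x + K x) has_integral (Psi pi - Psi 0)) {0..pi}"
    by (rule fundamental_theorem_of_calculus_interior) (use cont der in auto)
  hence i1: "((\<lambda>x. 2 * real m * sin (2 * real m * x) * Fd x + K x) has_integral 0) {0..pi}"
    by (simp add: Psi_def)
  have i2: "(K has_integral 0) {0..pi}"
  proof -
    have "(K has_integral (\<Sum>j<m. 2 * (0 + 0))) {0..pi}"
      unfolding K_def by (intro has_integral_sum has_integral_mult_right has_integral_add J2) auto
    thus ?thesis by simp
  qed
  have "((\<lambda>x. (2 * real m * sin (2 * real m * x) * Fd x + K x) - K x) has_integral (0 - 0)) {0..pi}"
    by (rule has_integral_diff[OF i1 i2])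
  hence "((\<lambda>x. (1 / (2 * real m)) * (2 * real m * sin (2 * real m * x) * Fd x)) has_integral (1 / (2 * real m)) * 0) {0..pi}"
    by (intro has_integral_mult_right) simp
  moreover have "(\<lambda>x. (1 / (2 * real m)) * (2 * real m * sin (2 * real m * x) * Fd x)) = (\<lambda>u. sin (2 * real m * u) * Fd u)"
    using m by (auto simp: field_simps)
  ultimately show ?thesis by simp
qed

lemma Fd_integrable: "Fd integrable_on {0..pi}"
proof -
  define Psi where "Psi x = (1 - cos (2 * real (1::nat) * x)) * Fd x" for x
  have "Psi = (\<lambda>x. (2 * (\<Sum>j<1. sin ((2 * real j + 1) * x))) * Hs (sin x))"
    by (rule ext) (unfold Psi_def T2 Hs_sin, simp add: algebra_simps)
  hence "continuous_on {0..pi} Psi"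
    by (simp only:) (intro continuous_at_imp_continuous_on ballI continuous_intros isCont_Hs_sin)
  hence "Psi integrable_on {0..pi}" by (rule integrable_continuous_real)
  moreover have "(\<lambda>u. cos (2 * real (1::nat) * u) * Fd u) integrable_on {0..pi}"
    using I1[of 1] by blast
  ultimately have "(\<lambda>x. Psi x + cos (2 * real (1::nat) * x) * Fd x) integrable_on {0..pi}"
    by (rule integrable_add)
  moreover have "(\<lambda>x. Psi x + cos (2 * real (1::nat) * x) * Fd x) = Fd"
    by (auto simp: Psi_def algebra_simps)
  ultimately show ?thesis by simp
qed

lemma Fd_periodic: "Fd (u + pi) = Fd u"
  by (simp add: Fd_def sin_add)

lemma image_half: "(\<lambda>x. x / 2) ` {0..pi} = {0..pi/2}"
proof
  show "(\<lambda>x. x / 2) ` {0..pi} \<subseteq> {0..pi / 2}" by auto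
  show "{0..pi / 2} \<subseteq> (\<lambda>x. x / 2) ` {0..pi}"
  proof
    fix y assume "y \<in> {0..pi/2}"
    hence "2 * y \<in> {0..pi}" "y = (2 * y) / 2" by auto
    thus "y \<in> (\<lambda>x. x / 2) ` {0..pi}" by blast
  qed
qed

lemma I3: "(Fd has_integral 0) {0..pi}"
proof -
  define I where "I = integral {0..pi} Fd"
  have hI: "(Fd has_integral I) {0..pi}" unfolding I_def by (rule integrable_integral[OF Fd_integrable])
  define A where "A = integral {0..pi/2} Fd"
  define B where "B = integral {pi/2..pi} Fd"
  have hA: "(Fd has_integral A) {0..pi/2}" unfolding A_def
    by (rule integrable_integral, rule integrable_subinterval_real[OF Fd_integrable]) auto
  have hB: "(Fd has_integral B) {pi/2..pi}" unfolding B_def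
    by (rule integrable_integral, rule integrable_subinterval_real[OF Fd_integrable]) auto
  have "(Fd has_integral (A + B)) {0..pi}" by (rule has_integral_combine[OF _ _ hA hB]) auto
  hence IAB: "I = A + B" using hI has_integral_unique by blast
  have hB': "((\<lambda>x. Fd (x + pi/2)) has_integral B) {0..pi/2}"
    using has_integral_shift_real_ivl[OF hB, of "pi/2"] by simp
  have hAB: "((\<lambda>x. Fd x + Fd (x + pi/2)) has_integral (A + B)) {0..pi/2}"
    by (rule has_integral_add[OF hA hB'])
  have h2: "((\<lambda>x. Fd (2 * x)) has_integral (A + B)) {0..pi/2}"
  proof (rule has_integral_spike_finite)
    show "finite {0, pi/2}" by simp
  next
    show "((\<lambda>x. Fd x + Fd (x + pi/2)) has_integral (A + B)) {0..pi/2}" by (rule hAB)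
  next
    fix x assume "x \<in> {0..pi/2} - {0, pi/2}"
    hence x: "0 < x" "x < pi/2" by auto
    have s: "sin x > 0" using x by (intro sin_gt_zero) auto
    have c: "cos x > 0" using x by (intro cos_gt_zero) auto
    have e1: "Fd (2 * x) = ln (4 * (2 * sin x * cos x)^2)"
      by (simp only: Fd_def sin_double)
    have e2: "4 * (2 * sin x * cos x)^2 = (4 * (sin x)^2) * (4 * (cos x)^2)"
      by (simp add: power_mult_distrib algebra_simps)
    have "Fd (2 * x) = ln ((4 * (sin x)^2) * (4 * (cos x)^2))" by (simp only: e1 e2)
    also have "\<dots> = ln (4 * (sin x)^2) + ln (4 * (cos x)^2)" using s c by (intro ln_mult_pos) simp_all
    also have "ln (4 * (sin x)^2) = Fd x" by (simp add: Fd_def)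
    also have "ln (4 * (cos x)^2) = Fd (x + pi/2)" by (simp add: Fd_def sin_add)
    finally show "Fd (2 * x) = Fd x + Fd (x + pi/2)" .
  qed
  have "((\<lambda>x. Fd (2 * x)) has_integral (1 / \<bar>2\<bar>) *\<^sub>R I) ((\<lambda>x. x / 2) ` {0..pi})"
    by (rule has_integral_stretch_real[OF hI]) simp
  hence "((\<lambda>x. Fd (2 * x)) has_integral I / 2) {0..pi/2}" by (simp add: image_half)
  hence "I / 2 = A + B" using h2 has_integral_unique by blast
  hence "I = 0" using IAB by simp
  thus ?thesis using hI by simp
qed

lemma shift_periodic:
  fixes g :: "real \<Rightarrow> real"
  assumes per: "\<And>u. g (u + pi) = g u" and hg: "(g has_integral J) {0..pi}" and t: "0 \<le> t" "t \<le> pi"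
  shows "((\<lambda>x. g (x - t)) has_integral J) {0..pi}"
proof -
  have ig: "g integrable_on {0..pi}" using hg by blast
  define J1 where "J1 = integral {0..pi - t} g"
  define J2 where "J2 = integral {pi - t..pi} g"
  have h1: "(g has_integral J1) {0..pi - t}" unfolding J1_def
    by (rule integrable_integral, rule integrable_subinterval_real[OF ig]) (use t in auto)
  have h2: "(g has_integral J2) {pi - t..pi}" unfolding J2_def
    by (rule integrable_integral, rule integrable_subinterval_real[OF ig]) (use t in auto)
  have "(g has_integral (J1 + J2)) {0..pi}" by (rule has_integral_combine[OF _ _ h1 h2]) (use t in auto)
  hence J: "J = J1 + J2" using hg has_integral_unique by blast
  have a: "((\<lambda>x. g (x - t)) has_integral J1) {t..pi}"
    using has_integral_shift_real_ivl[OF h1, of "- t"] by simp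
  have "((\<lambda>x. g (x + (pi - t))) has_integral J2) {0..t}"
    using has_integral_shift_real_ivl[OF h2, of "pi - t"] by simp
  moreover have "(\<lambda>x. g (x + (pi - t))) = (\<lambda>x. g (x - t))"
  proof
    fix x have "x + (pi - t) = (x - t) + pi" by simp
    hence "g (x + (pi - t)) = g ((x - t) + pi)" by (rule arg_cong[where f=g])
    also have "\<dots> = g (x - t)" by (rule per)
    finally show "g (x + (pi - t)) = g (x - t)" .
  qed
  ultimately have b: "((\<lambda>x. g (x - t)) has_integral J2) {0..t}" by simp
  have "((\<lambda>x. g (x - t)) has_integral (J2 + J1)) {0..pi}" by (rule has_integral_combine[OF _ _ b a]) (use t in auto)
  thus ?thesis using J by (simp add: add.commute)
qed

lemma I4:
  assumes t: "0 \<le> t" "t \<le> pi"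
  shows "((\<lambda>x. cos (2 * real m * x) * Fd (x - t)) has_integral (if m = 0 then 0 else - pi * cos (2 * real m * t) / real m)) {0..pi}"
proof -
  define g where "g u = cos (2 * real m * (u + t)) * Fd u" for u
  have per: "g (u + pi) = g u" for u
  proof -
    have "cos (2 * real m * (u + pi + t)) = cos (2 * real m * (u + t) + real (2 * m) * pi)" by (simp add: algebra_simps)
    also have "\<dots> = cos (2 * real m * (u + t))" by (simp add: cos_add sin_npi cos_npi)
    finally show ?thesis by (simp add: g_def Fd_periodic add.assoc[symmetric])
  qed
  have hg: "(g has_integral (if m = 0 then 0 else - pi * cos (2 * real m * t) / real m)) {0..pi}"
  proof (cases "m = 0")
    case True
    have "g = Fd" by (rule ext) (simp add: g_def True)
    thus ?thesis using I3 True by simp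
  next
    case False
    hence m: "m \<ge> 1" by simp
    have "((\<lambda>u. cos (2 * real m * t) * (cos (2 * real m * u) * Fd u) - sin (2 * real m * t) * (sin (2 * real m * u) * Fd u))
          has_integral (cos (2 * real m * t) * (- pi / real m) - sin (2 * real m * t) * 0)) {0..pi}"
      by (intro has_integral_diff has_integral_mult_right I1[OF m] I2[OF m])
    moreover have "(\<lambda>u. cos (2 * real m * t) * (cos (2 * real m * u) * Fd u) - sin (2 * real m * t) * (sin (2 * real m * u) * Fd u)) = g"
      by (auto simp: g_def cos_add algebra_simps)
    moreover have "cos (2 * real m * t) * (- pi / real m) - sin (2 * real m * t) * 0 = - pi * cos (2 * real m * t) / real m"
      by simp
    ultimately have "(g has_integral (- pi * cos (2 * real m * t) / real m)) {0..pi}" by metis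
    thus ?thesis using False by simp
  qed
  have "((\<lambda>x. g (x - t)) has_integral (if m = 0 then 0 else - pi * cos (2 * real m * t) / real m)) {0..pi}"
    by (rule shift_periodic[OF per hg t])
  thus ?thesis by (simp add: g_def)
qed

lemma DERIV_prod_logderiv:
  fixes f :: "'a \<Rightarrow> complex \<Rightarrow> complex"
  assumes "finite A" "\<And>i. i \<in> A \<Longrightarrow> (f i has_field_derivative f' i) (at z)" "\<And>i. i \<in> A \<Longrightarrow> f i z \<noteq> 0"
  shows "((\<lambda>z. \<Prod>i\<in>A. f i z) has_field_derivative (\<Prod>i\<in>A. f i z) * (\<Sum>i\<in>A. f' i / f i z)) (at z)"
  using assms
proof (induction A rule: finite_induct)
  case empty thus ?case by simp
next
  case (insert x A)
  have d1: "(f x has_field_derivative f' x) (at z)" using insert.prems by simp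
  have d2: "((\<lambda>z. \<Prod>i\<in>A. f i z) has_field_derivative (\<Prod>i\<in>A. f i z) * (\<Sum>i\<in>A. f' i / f i z)) (at z)"
    using insert by simp
  have nz: "f x z \<noteq> 0" using insert.prems by simp
  have "((\<lambda>z. f x z * (\<Prod>i\<in>A. f i z)) has_field_derivative
          f x z * ((\<Prod>i\<in>A. f i z) * (\<Sum>i\<in>A. f' i / f i z)) + f' x * (\<Prod>i\<in>A. f i z)) (at z)"
    using DERIV_mult[OF d1 d2] by (simp add: algebra_simps)
  moreover have "f x z * ((\<Prod>i\<in>A. f i z) * (\<Sum>i\<in>A. f' i / f i z)) + f' x * (\<Prod>i\<in>A. f i z)
      = (f x z * (\<Prod>i\<in>A. f i z)) * (f' x / f x z + (\<Sum>i\<in>A. f' i / f i z))"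
    using nz by (simp add: field_simps)
  ultimately show ?case using insert.hyps by simp
qed

definition Einv :: "complex \<Rightarrow> complex fps" where
  "Einv c = Abs_fps (\<lambda>k. if even k then (1 / c) ^ (k div 2 + 1) else 0)"

lemma Einv_inverse:
  assumes "c \<noteq> 0"
  shows "inverse (fps_const c - fps_X ^ 2) = Einv c"
proof (rule fps_inverse_unique)
  show "(fps_const c - fps_X ^ 2) * Einv c = 1"
  proof (rule fps_ext)
    fix k
    show "fps_nth ((fps_const c - fps_X ^ 2) * Einv c) k = fps_nth 1 k"
    proof (cases k)
      case 0 thus ?thesis using assms by (simp add: Einv_def)
    next
      case (Suc j)
      show ?thesis
      proof (cases j)
        case 0 thus ?thesis using Suc by (simp add: Einv_def algebra_simps)
      next
        case (Suc i)
        hence k: "k = Suc (Suc i)" using \<open>k = Suc j\<close> by simp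
        have "fps_nth ((fps_const c - fps_X ^ 2) * Einv c) k = c * fps_nth (Einv c) k - fps_nth (Einv c) i"
          by (simp add: k algebra_simps fps_X_power_mult_nth fps_X_power_mult_right_nth)
        also have "\<dots> = 0" using assms by (auto simp: Einv_def k field_simps)
        finally show ?thesis using k by simp
      qed
    qed
  qed
qed

definition tt :: "complex \<Rightarrow> complex \<Rightarrow> complex" where
  "tt c z = -2 * z * inverse (c - z ^ 2)"

lemma tt_fps:
  assumes "c \<noteq> 0"
  shows "tt c has_fps_expansion (fps_const (-2) * fps_X * Einv c)"
proof -
  have "(\<lambda>z. c - z ^ 2) has_fps_expansion (fps_const c - fps_X ^ 2)"
    by (intro fps_expansion_intros)
  hence "(\<lambda>z. inverse (c - z ^ 2)) has_fps_expansion inverse (fps_const c - fps_X ^ 2)"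
    by (rule has_fps_expansion_inverse) (use assms in \<open>simp add: fps_sub_nth fps_X_power_nth\<close>)
  hence "(\<lambda>z. -2 * z * inverse (c - z ^ 2)) has_fps_expansion (fps_const (-2) * fps_X * inverse (fps_const c - fps_X ^ 2))"
    by (intro has_fps_expansion_mult has_fps_expansion_fps_X has_fps_expansion_const)
  thus ?thesis unfolding Einv_inverse[OF assms] tt_def[abs_def] by simp
qed

lemma tt_nth:
  assumes "m \<ge> 1"
  shows "fps_nth (fps_const (-2) * fps_X * Einv c) (2 * m - 1) = -2 * (1 / c) ^ m"
proof -
  obtain k where m: "m = Suc k" using assms by (cases m) auto
  have "2 * m - 1 = Suc (2 * k)" using m by simp
  thus ?thesis using m by (simp add: Einv_def mult.assoc fps_mult_left_const_nth field_simps)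
qed

lemma eventually_near1:
  fixes f :: "complex \<Rightarrow> complex"
  assumes "isCont f 0" "f 0 = 1"
  shows "eventually (\<lambda>z. dist (f z) 1 < 1) (nhds 0)"
proof -
  have "(f \<longlongrightarrow> 1) (at 0)" using assms by (simp add: isCont_def)
  hence "eventually (\<lambda>z. dist (f z) 1 < 1) (at 0)" by (rule tendstoD) simp
  thus ?thesis using assms by (simp add: eventually_nhds_conv_at)
qed

lemma near1_not_nonpos: "dist w 1 < 1 \<Longrightarrow> (w::complex) \<notin> \<real>\<^sub>\<le>\<^sub>0"
proof
  assume d: "dist w 1 < 1" and w: "w \<in> \<real>\<^sub>\<le>\<^sub>0"
  have "\<bar>Re w - 1\<bar> \<le> cmod (w - 1)" using abs_Re_le_cmod[of "w - 1"] by simp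
  hence "Re w > 0" using d by (simp add: dist_norm)
  moreover have "Re w \<le> 0" using w by (auto simp: complex_nonpos_Reals_iff)
  ultimately show False by simp
qed

lemma Ln_deriv_main:
  fixes c :: "nat \<Rightarrow> complex" and N0 n m :: nat
  assumes c: "\<And>i. i < n \<Longrightarrow> c i \<noteq> 0" and m: "m \<ge> 1"
  shows "(deriv ^^ (2 * m)) (\<lambda>z. Ln ((1 - z ^ 2) ^ N0 * (\<Prod>i<n. (1 - z ^ 2 / c i)))) 0
       = fact (2 * m - 1) * (- 2 * of_nat N0 - 2 * (\<Sum>i<n. (1 / c i) ^ m))"
proof -
  define R where "R z = (1 - z ^ 2) ^ N0 * (\<Prod>i<n. (1 - z ^ 2 / c i))" for z :: complex
  define D where "D z = of_nat N0 * tt 1 z + (\<Sum>i<n. tt (c i) z)" for z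
  have ev1: "eventually (\<lambda>z. dist (R z) 1 < 1) (nhds 0)"
    by (rule eventually_near1) (use c in \<open>auto simp: R_def[abs_def] intro!: continuous_intros\<close>)
  have ev2: "eventually (\<lambda>z. dist (1 - z ^ 2) 1 < 1) (nhds (0::complex))"
    by (rule eventually_near1) (auto intro!: continuous_intros)
  have ev3: "eventually (\<lambda>z. \<forall>i\<in>{..<n}. dist (1 - z ^ 2 / c i) 1 < 1) (nhds 0)"
  proof (rule eventually_ball_finite)
    show "finite {..<n}" by simp
    show "\<forall>i\<in>{..<n}. eventually (\<lambda>z. dist (1 - z ^ 2 / c i) 1 < 1) (nhds 0)"
    proof
      fix i assume i: "i \<in> {..<n}"
      show "eventually (\<lambda>z. dist (1 - z ^ 2 / c i) 1 < 1) (nhds 0)"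
        by (rule eventually_near1) (use c i in \<open>auto intro!: continuous_intros\<close>)
    qed
  qed
  have evD: "eventually (\<lambda>z. deriv (\<lambda>z. Ln (R z)) z = D z) (nhds 0)"
    using ev1 ev2 ev3
  proof eventually_elim
    case (elim z)
    have Rz: "R z \<notin> \<real>\<^sub>\<le>\<^sub>0" using elim(1) by (rule near1_not_nonpos)
    have f1: "1 - z ^ 2 \<noteq> 0"
    proof
      assume eq: "1 - z ^ 2 = 0"
      show False using elim(2) unfolding eq by simp
    qed
    have fi: "1 - z ^ 2 / c i \<noteq> 0" if i: "i \<in> {..<n}" for i
    proof
      assume eq: "1 - z ^ 2 / c i = 0"
      have "dist (1 - z ^ 2 / c i) 1 < 1" using elim(3) i by blast
      thus False unfolding eq by simp
    qed
    have dP: "((\<lambda>z. \<Prod>i<n. (1 - z ^ 2 / c i)) has_field_derivative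
         (\<Prod>i<n. (1 - z ^ 2 / c i)) * (\<Sum>i<n. (- 2 * z / c i) / (1 - z ^ 2 / c i))) (at z)"
    proof (rule DERIV_prod_logderiv)
      fix i assume i: "i \<in> {..<n}"
      show "((\<lambda>z. 1 - z ^ 2 / c i) has_field_derivative - 2 * z / c i) (at z)"
        using c i by (auto intro!: derivative_eq_intros)
      show "1 - z ^ 2 / c i \<noteq> 0" by (rule fi[OF i])
    qed simp
    have dQ: "((\<lambda>z. (1 - z ^ 2) ^ N0) has_field_derivative of_nat N0 * (1 - z ^ 2) ^ (N0 - 1) * (- 2 * z)) (at z)"
      by (auto intro!: derivative_eq_intros)
    have dR: "(R has_field_derivative (of_nat N0 * (1 - z ^ 2) ^ (N0 - 1) * (- 2 * z)) * (\<Prod>i<n. (1 - z ^ 2 / c i))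
             + (1 - z ^ 2) ^ N0 * ((\<Prod>i<n. (1 - z ^ 2 / c i)) * (\<Sum>i<n. (- 2 * z / c i) / (1 - z ^ 2 / c i)))) (at z)"
      unfolding R_def[abs_def] using DERIV_mult'[OF dQ dP] by (simp only: add.commute)
    have "((\<lambda>z. Ln (R z)) has_field_derivative inverse (R z) *
            ((of_nat N0 * (1 - z ^ 2) ^ (N0 - 1) * (- 2 * z)) * (\<Prod>i<n. (1 - z ^ 2 / c i))
             + (1 - z ^ 2) ^ N0 * ((\<Prod>i<n. (1 - z ^ 2 / c i)) * (\<Sum>i<n. (- 2 * z / c i) / (1 - z ^ 2 / c i))))) (at z)"
      using DERIV_chain2[OF has_field_derivative_Ln[OF Rz] dR] by (simp add: mult.commute)
    moreover have "inverse (R z) *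
            ((of_nat N0 * (1 - z ^ 2) ^ (N0 - 1) * (- 2 * z)) * (\<Prod>i<n. (1 - z ^ 2 / c i))
             + (1 - z ^ 2) ^ N0 * ((\<Prod>i<n. (1 - z ^ 2 / c i)) * (\<Sum>i<n. (- 2 * z / c i) / (1 - z ^ 2 / c i)))) = D z"
    proof -
      have P0: "(\<Prod>i<n. (1 - z ^ 2 / c i)) \<noteq> 0" using fi by simp
      have Q0: "(1 - z ^ 2) ^ N0 \<noteq> 0" using f1 by simp
      have s1: "(\<Sum>i<n. (- 2 * z / c i) / (1 - z ^ 2 / c i)) = (\<Sum>i<n. tt (c i) z)"
      proof (rule sum.cong)
        fix i assume i: "i \<in> {..<n}"
        have "c i \<noteq> 0" using c i by simp
        moreover have "c i - z ^ 2 \<noteq> 0" using fi[OF i] \<open>c i \<noteq> 0\<close> by (simp add: field_simps)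
        ultimately show "(- 2 * z / c i) / (1 - z ^ 2 / c i) = tt (c i) z"
          using fi[OF i] by (simp add: tt_def field_simps)
      qed simp
      have s2: "of_nat N0 * (1 - z ^ 2) ^ (N0 - 1) * (- 2 * z) = (1 - z ^ 2) ^ N0 * (of_nat N0 * tt 1 z)"
      proof (cases N0)
        case 0 thus ?thesis by simp
      next
        case (Suc k)
        thus ?thesis using f1 by (simp add: tt_def field_simps)
      qed
      show ?thesis unfolding s1 s2 D_def R_def using P0 Q0 by (simp add: field_simps)
    qed
    ultimately show ?case by (metis DERIV_imp_deriv)
  qed
  define G where "G = fps_const (of_nat N0) * (fps_const (-2) * fps_X * Einv 1) + (\<Sum>i<n. fps_const (-2) * fps_X * Einv (c i))"
  have DG: "D has_fps_expansion G"
    unfolding D_def[abs_def] G_def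
    by (intro has_fps_expansion_add has_fps_expansion_sum has_fps_expansion_cmult_left tt_fps) (use c in auto)
  have a: "fps_nth G (2 * m - 1) = (deriv ^^ (2 * m - 1)) D 0 / fact (2 * m - 1)"
    by (rule fps_nth_fps_expansion[OF DG])
  have a': "(deriv ^^ (2 * m - 1)) D 0 = fact (2 * m - 1) * fps_nth G (2 * m - 1)"
    unfolding a by simp
  have b: "fps_nth G (2 * m - 1) = of_nat N0 * (-2 * (1 / 1) ^ m) + (\<Sum>i<n. -2 * (1 / c i) ^ m)"
    unfolding G_def using tt_nth[OF m] by (simp add: fps_sum_nth)
  have cc: "(deriv ^^ (2 * m)) (\<lambda>z. Ln (R z)) 0 = (deriv ^^ (2 * m - 1)) D 0"
  proof -
    have "2 * m = Suc (2 * m - 1)" using m by simp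
    hence "(deriv ^^ (2 * m)) (\<lambda>z. Ln (R z)) = (deriv ^^ (2 * m - 1)) (deriv (\<lambda>z. Ln (R z)))"
      by (metis funpow_Suc_right o_apply)
    moreover have "(deriv ^^ (2 * m - 1)) (deriv (\<lambda>z. Ln (R z))) 0 = (deriv ^^ (2 * m - 1)) D 0"
      by (rule higher_deriv_cong_ev[OF evD refl])
    ultimately show ?thesis by simp
  qed
  have "(deriv ^^ (2 * m)) (\<lambda>z. Ln (R z)) 0 = fact (2 * m - 1) * (of_nat N0 * (-2 * (1 / 1) ^ m) + (\<Sum>i<n. -2 * (1 / c i) ^ m))"
    unfolding cc a' b ..
  also have "\<dots> = fact (2 * m - 1) * (- 2 * of_nat N0 - 2 * (\<Sum>i<n. (1 / c i) ^ m))"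
    by (simp add: sum_distrib_left algebra_simps sum_negf)
  finally show ?thesis unfolding R_def .
qed

lemma cmod_cis_diff: "cmod (cis (2 * x) - cis (2 * y)) ^ 2 = 4 * (sin (x - y)) ^ 2"
proof -
  have "cmod (cis (2 * x) - cis (2 * y)) ^ 2 = (cos (2 * x) - cos (2 * y)) ^ 2 + (sin (2 * x) - sin (2 * y)) ^ 2"
    by (simp add: cmod_power2)
  also have "\<dots> = 2 - 2 * (cos (2 * x) * cos (2 * y) + sin (2 * x) * sin (2 * y))"
    using sin_cos_squared_add[of "2 * x"] sin_cos_squared_add[of "2 * y"] by (simp add: power2_eq_square algebra_simps)
  also have "cos (2 * x) * cos (2 * y) + sin (2 * x) * sin (2 * y) = cos (2 * (x - y))"
    by (simp add: cos_diff algebra_simps)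
  also have "cos (2 * (x - y)) = 1 - 2 * (sin (x - y)) ^ 2" by (rule cos_double_sin)
  finally show ?thesis by simp
qed

lemma integrand_eq:
  assumes lam: "lam \<ge> 1"
    and Q: "\<And>w. poly (cmp (Qr lam n)) w = complex_of_real (PC lam n) * (\<Prod>i<n. w - cis (2 * t i))"
    and t: "\<And>i. i < n \<Longrightarrow> 0 < t i \<and> t i < pi"
    and th: "th \<in> {0..pi} - t ` {..<n}"
  shows "ln ((gegenbauer lam n (cos th)) ^ 2) = 2 * ln (PC lam n) + (\<Sum>i<n. Fd (th - t i))"
proof -
  have PC: "PC lam n > 0" using lam by (intro PC_pos) simp
  have "complex_of_real (gegenbauer lam n (cos th)) = cis (- (real n * th)) * poly (cmp (Qr lam n)) (cis (2 * th))"
    using gegenbauer_Q[of lam n th] lam by (simp add: poly_cmp_Qr)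
  hence "(gegenbauer lam n (cos th)) ^ 2 = cmod (poly (cmp (Qr lam n)) (cis (2 * th))) ^ 2"
    by (metis norm_cis mult_1 norm_mult norm_of_real power2_abs)
  also have "\<dots> = (PC lam n) ^ 2 * (\<Prod>i<n. 4 * (sin (th - t i)) ^ 2)"
    unfolding Q norm_mult prod_norm[symmetric] power_mult_distrib prod_power_distrib cmod_cis_diff
    using PC by simp
  finally have g2: "(gegenbauer lam n (cos th)) ^ 2 = (PC lam n) ^ 2 * (\<Prod>i<n. 4 * (sin (th - t i)) ^ 2)" .
  have pos: "4 * (sin (th - t i)) ^ 2 > 0" if i: "i < n" for i
  proof -
    have "th \<noteq> t i" using th i by auto
    moreover have "- pi < th - t i" "th - t i < pi" using th t[OF i] by auto
    ultimately have "sin (th - t i) \<noteq> 0" using sin_eq_0_pi[of "th - t i"] by auto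
    thus ?thesis by simp
  qed
  have "ln ((gegenbauer lam n (cos th)) ^ 2) = ln ((PC lam n) ^ 2) + ln (\<Prod>i<n. 4 * (sin (th - t i)) ^ 2)"
    unfolding g2 using PC pos by (intro ln_mult_pos) (auto intro!: prod_pos)
  also have "ln ((PC lam n) ^ 2) = 2 * ln (PC lam n)" using PC by (simp add: ln_realpow)
  also have "ln (\<Prod>i<n. 4 * (sin (th - t i)) ^ 2) = (\<Sum>i<n. Fd (th - t i))"
    using pos by (subst ln_prod) (auto simp: Fd_def)
  finally show ?thesis .
qed

lemma integral_main:
  assumes lam: "lam \<ge> 1"
    and Q: "\<And>w. poly (cmp (Qr lam n)) w = complex_of_real (PC lam n) * (\<Prod>i<n. w - cis (2 * t i))"
    and t: "\<And>i. i < n \<Longrightarrow> 0 < t i \<and> t i < pi"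
  shows "((\<lambda>th. cos (2 * real k * th) * ln ((gegenbauer lam n (cos th)) ^ 2)) has_integral
          (2 * ln (PC lam n) * (if k = 0 then pi else 0) + (\<Sum>i<n. if k = 0 then 0 else - pi * cos (2 * real k * t i) / real k))) {0..pi}"
proof (rule has_integral_spike_finite)
  show "finite (t ` {..<n})" by simp
next
  fix th assume th: "th \<in> {0..pi} - t ` {..<n}"
  show "cos (2 * real k * th) * ln ((gegenbauer lam n (cos th)) ^ 2) =
        cos (2 * real k * th) * (2 * ln (PC lam n)) + (\<Sum>i<n. cos (2 * real k * th) * Fd (th - t i))"
    using integrand_eq[OF lam Q t th] by (simp add: algebra_simps sum_distrib_left sum_distrib_right)
next
  have a: "((\<lambda>th. cos (2 * real k * th) * (2 * ln (PC lam n))) has_integral (if k = 0 then pi else 0) * (2 * ln (PC lam n))) {0..pi}"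
    by (rule has_integral_mult_left[OF J1])
  have b: "((\<lambda>th. \<Sum>i<n. cos (2 * real k * th) * Fd (th - t i)) has_integral
           (\<Sum>i<n. if k = 0 then 0 else - pi * cos (2 * real k * t i) / real k)) {0..pi}"
    by (intro has_integral_sum I4) (use t in \<open>auto simp: less_imp_le\<close>)
  show "((\<lambda>th. cos (2 * real k * th) * (2 * ln (PC lam n)) + (\<Sum>i<n. cos (2 * real k * th) * Fd (th - t i))) has_integral
          (2 * ln (PC lam n) * (if k = 0 then pi else 0) + (\<Sum>i<n. if k = 0 then 0 else - pi * cos (2 * real k * t i) / real k))) {0..pi}"
    using has_integral_add[OF a b] by (simp add: mult.commute)
qed

lemma gpoly_ratio:
  assumes lam: "lam \<ge> 1"
    and Q: "\<And>w. poly (cmp (Qr lam n)) w = complex_of_real (PC lam n) * (\<Prod>i<n. w - cis (2 * t i))"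
  shows "gpoly lam n z / gpoly lam n 0 = (1 - z ^ 2) ^ (2 * lam - 1) * (\<Prod>i<n. (1 - z ^ 2 / cis (2 * t i)))"
proof -
  have PC: "complex_of_real (PC lam n) \<noteq> 0" using PC_pos[of lam n] lam by simp
  have K: "complex_of_real (kap lam n) \<noteq> 0" using kap_nz by simp
  have G: "poly (cmp (Gr lam n)) w = (w - 1) ^ (2 * lam - 1) * complex_of_real (PC lam n) * (\<Prod>i<n. w - cis (2 * t i)) / complex_of_real (kap lam n)" for w
    using main_complex[OF lam, of w n] K unfolding Q by (simp add: field_simps)
  have e1: "gpoly lam n z = (z ^ 2 - 1) ^ (2 * lam - 1) * complex_of_real (PC lam n) * (\<Prod>i<n. z ^ 2 - cis (2 * t i)) / complex_of_real (kap lam n)"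
    using gpoly_Gr[OF lam] G by simp
  have e0: "gpoly lam n 0 = (- 1) ^ (2 * lam - 1) * complex_of_real (PC lam n) * (\<Prod>i<n. - cis (2 * t i)) / complex_of_real (kap lam n)"
    using gpoly_Gr[OF lam, of n 0] G[of 0] by simp
  have P0: "(\<Prod>i<n. - cis (2 * t i)) \<noteq> 0" by simp
  have "gpoly lam n z / gpoly lam n 0 = ((z ^ 2 - 1) ^ (2 * lam - 1) / (- 1) ^ (2 * lam - 1)) * ((\<Prod>i<n. z ^ 2 - cis (2 * t i)) / (\<Prod>i<n. - cis (2 * t i)))"
    unfolding e1 e0 using PC K P0 by (simp add: field_simps)
  also have "(z ^ 2 - 1) ^ (2 * lam - 1) / (- 1) ^ (2 * lam - 1) = (1 - z ^ 2) ^ (2 * lam - 1)"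
    by (simp add: power_divide[symmetric])
  also have "(\<Prod>i<n. z ^ 2 - cis (2 * t i)) / (\<Prod>i<n. - cis (2 * t i)) = (\<Prod>i<n. (z ^ 2 - cis (2 * t i)) / (- cis (2 * t i)))"
    by (rule prod_dividef[symmetric])
  also have "\<dots> = (\<Prod>i<n. (1 - z ^ 2 / cis (2 * t i)))"
    by (rule prod.cong) (auto simp: field_simps)
  finally show ?thesis .
qed

lemma Re_inv_cis_pow: "Re ((1 / cis (2 * x)) ^ m) = cos (2 * real m * x)"
proof -
  have a: "1 / cis (2 * x) = cis (- (2 * x))"
    using cis_divide[of 0 "2 * x"] by simp
  have "(1 / cis (2 * x)) ^ m = cis (real m * (- (2 * x)))"
    unfolding a by (rule Complex.DeMoivre)
  moreover have "cos (real m * (- (2 * x))) = cos (2 * real m * x)"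
    by (simp add: algebra_simps)
  ultimately show ?thesis by simp
qed

theorem theorem1:
  fixes lam n :: nat
  assumes "lam \<ge> 1"
  shows "(((\<lambda>\<theta>. cos (2 * real (0::nat) * \<theta>) * ln ((gegenbauer lam n (cos \<theta>))^2)) has_integral
            (2 * pi * ln (pochhammer (real lam) n / fact n))) {0..pi}) \<and>
         (\<forall>m::nat. m \<ge> 1 \<longrightarrow>
         ((\<lambda>\<theta>. cos (2 * real m * \<theta>) * ln ((gegenbauer lam n (cos \<theta>))^2)) has_integral
            ((2 * real lam - 1) * pi / real m
             + pi / fact (2*m) *
               Re ((deriv ^^ (2*m)) (\<lambda>z. Ln (gpoly lam n z / gpoly lam n 0)) 0))) {0..pi})"
proof -
  obtain t where t0: "\<forall>i<n. 0 < t i \<and> t i < pi"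
      and Q0: "\<forall>w. poly (cmp (Qr lam n)) w = complex_of_real (PC lam n) * (\<Prod>i<n. w - cis (2 * t i))"
    using Q_factor[OF assms, of n] by blast
  have t: "\<And>i. i < n \<Longrightarrow> 0 < t i \<and> t i < pi" using t0 by blast
  have Q: "\<And>w. poly (cmp (Qr lam n)) w = complex_of_real (PC lam n) * (\<Prod>i<n. w - cis (2 * t i))" using Q0 by blast
  have part1: "((\<lambda>\<theta>. cos (2 * real (0::nat) * \<theta>) * ln ((gegenbauer lam n (cos \<theta>))^2)) has_integral
            (2 * pi * ln (pochhammer (real lam) n / fact n))) {0..pi}"
    using integral_main[OF assms Q t, of 0] by (simp add: PC_def algebra_simps)
  have part2: "((\<lambda>\<theta>. cos (2 * real m * \<theta>) * ln ((gegenbauer lam n (cos \<theta>))^2)) has_integral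
            ((2 * real lam - 1) * pi / real m
             + pi / fact (2*m) *
               Re ((deriv ^^ (2*m)) (\<lambda>z. Ln (gpoly lam n z / gpoly lam n 0)) 0))) {0..pi}"
    if m: "m \<ge> 1" for m
  proof -
    have hfun: "(\<lambda>z. Ln (gpoly lam n z / gpoly lam n 0)) = (\<lambda>z. Ln ((1 - z ^ 2) ^ (2 * lam - 1) * (\<Prod>i<n. (1 - z ^ 2 / cis (2 * t i)))))"
      by (rule ext) (simp only: gpoly_ratio[OF assms Q])
    have D: "(deriv ^^ (2 * m)) (\<lambda>z. Ln (gpoly lam n z / gpoly lam n 0)) 0
        = fact (2 * m - 1) * (- 2 * of_nat (2 * lam - 1) - 2 * (\<Sum>i<n. (1 / cis (2 * t i)) ^ m))"
      unfolding hfun by (rule Ln_deriv_main) (use m in simp_all)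
    have ReD: "Re ((deriv ^^ (2 * m)) (\<lambda>z. Ln (gpoly lam n z / gpoly lam n 0)) 0)
        = fact (2 * m - 1) * (- 2 * (2 * real lam - 1) - 2 * (\<Sum>i<n. cos (2 * real m * t i)))"
      unfolding D using assms by (simp add: Re_sum Re_inv_cis_pow of_nat_diff)
    have f: "fact (2 * m) = real (2 * m) * fact (2 * m - 1)"
      by (rule fact_reduce) (use m in simp)
    define S where "S = (\<Sum>i<n. cos (2 * real m * t i))"
    define F where "F = (fact (2 * m - 1) :: real)"
    have F0: "F > 0" by (simp add: F_def)
    have m0: "real m > 0" using m by simp
    have "(2 * real lam - 1) * pi / real m + pi / fact (2 * m) * Re ((deriv ^^ (2 * m)) (\<lambda>z. Ln (gpoly lam n z / gpoly lam n 0)) 0)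
        = (2 * real lam - 1) * pi / real m + pi / (2 * real m * F) * (F * (- 2 * (2 * real lam - 1) - 2 * S))"
      unfolding ReD f S_def F_def by simp
    also have "\<dots> = - pi * S / real m" using F0 m0 by (simp add: field_simps)
    also have "\<dots> = 2 * ln (PC lam n) * (if m = 0 then pi else 0) + (\<Sum>i<n. if m = 0 then 0 else - pi * cos (2 * real m * t i) / real m)"
      using m by (simp add: S_def sum_divide_distrib sum_distrib_left)
    finally have val: "(2 * real lam - 1) * pi / real m + pi / fact (2 * m) * Re ((deriv ^^ (2 * m)) (\<lambda>z. Ln (gpoly lam n z / gpoly lam n 0)) 0)
        = 2 * ln (PC lam n) * (if m = 0 then pi else 0) + (\<Sum>i<n. if m = 0 then 0 else - pi * cos (2 * real m * t i) / real m)" .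
    show ?thesis unfolding val by (rule integral_main[OF assms Q t])
  qed
  show ?thesis using part1 part2 by blast
qed

end
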